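(* There exists a function $\chi:\partial\Delta\times\mathbb R_{\ge0}\times A\to\mathbb R$, $(s,\gamma,\omega)\mapsto\chi(s,\gamma,\omega)$, which is smooth with respect to $(s,\gamma)$ and affine linear with respect to $\omega$ (for fixed $(s,\gamma)$, $\omega\mapsto\chi(s,\gamma,\omega)$ is the restriction to $A$ of an affine function on $M$), and satisfies: (i) $\chi(s,0,\omega)\equiv0$ and $\chi(s,\gamma,0)\equiv\gamma\cdot\lambda(0)$; (ii) as $\gamma\to\infty$, the function $s\mapsto e^{\gamma\lambda(\omega)-\chi(s,\gamma,\omega)}$ converges uniformly to $\rho_\omega(s)$, for every $\omega\in A$.
   Context: $M\cong\mathbb R^N$ with lattice $\mathbb Z^N$ and origin $0$; $\Delta\subset M$ an $N$-dimensional convex lattice polytope which is reflexive ($0$ interior, polar polytope $\{u:\langle u,m\rangle\ge-1\ \forall m\in\Delta\}$ integral) and nonsingular (each vertex lies on exactly $N$ edges whose lattice points generate $\mathbb Z^N$). $A\subset\Delta\cap\mathbb Z^N$ contains $0$ and all vertices of $\Delta$. $T$ is a coherent central triangulation of $\Delta$ with vertices in $A$ (central: $0$ is a vertex of every maximal simplex). Call $\psi:\Delta\to\mathbb R$ convex if $\psi(tx+(1-t)y)\ge t\psi(x)+(1-t)\psi(y)$. $\lambda:A\to\mathbb Z$ is fixed such that the $T$-piecewise linear function $\psi_\lambda$ interpolating $\lambda$ at the vertices of $T$ is convex with the maximal simplices of $T$ as its maximal domains of linearity, and $\psi_\lambda(\omega)\ge\lambda(\omega)$ for all $\omega\in A$,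 with equality exactly at the vertices of $T$. $\partial T$ is the triangulation of $\partial\Delta$ induced by $T$, $O(\tau)$ the barycenter of $\tau\in\partial T$. $V^0_\tau$ is the union of the simplices of the second barycentric subdivision of $\partial T$ having $O(\tau)$ as a vertex; $V_\tau\supset V^0_\tau$ is a small open neighbourhood in $\partial\Delta$ chosen so that $V_\tau\cap V_{\tau'}\ne\emptyset$ iff $\tau\subseteq\tau'$ or $\tau'\subseteq\tau$; $W_\tau:=\overline{V_\tau}\setminus\bigcup_{\tau'\supsetneq\tau}V_{\tau'}$. $\{\rho^0_\tau\}_{\tau\in\partial T}$ is a smooth partition of unity on $\partial\Delta$ subordinate to $\{V_\tau\}$. For a vertex $\omega$ of $\partial T$, $\rho_\omega:=\sum_{\tau\ni\omega}\rho^0_\tau$; $\rho_0\equiv1$; $\rho_\omega\equiv0$ for $\omega\in A$ not a vertex of $T$. *)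

theory Defs
  imports "HOL-Analysis.Analysis"
begin

definition lattice_point :: "real^'n \<Rightarrow> bool" where
  "lattice_point x \<longleftrightarrow> (\<forall>i. x $ i \<in> \<int>)"

definition lattice_polytope :: "(real^'n) set \<Rightarrow> bool" where
  "lattice_polytope P \<longleftrightarrow>
     (\<exists>V. finite V \<and> (\<forall>v\<in>V. lattice_point v) \<and> P = convex hull V)"

text \<open>Polar polytope, with the dual space identified with M via the standard
  inner product (so that the dual lattice is again the integer lattice).\<close>
definition polar :: "(real^'n) set \<Rightarrow> (real^'n) set" where
  "polar P = {u. \<forall>m\<in>P. u \<bullet> m \<ge> -1}"

definition reflexive_polytope :: "(real^'n) set \<Rightarrow> bool" where
  "reflexive_polytope P \<longleftrightarrow>
     lattice_polytope P \<and> 0 \<in> interior P \<and> lattice_polytope (polar P)"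

definition int_span :: "(real^'n) set \<Rightarrow> (real^'n) set" where
  "int_span S = {\<Sum>x\<in>F. of_int (c x) *\<^sub>R x | F c. finite F \<and> F \<subseteq> S}"

definition is_edge_of :: "(real^'n) set \<Rightarrow> (real^'n) set \<Rightarrow> bool" where
  "is_edge_of E P \<longleftrightarrow> E face_of P \<and> aff_dim E = 1"

definition nonsingular_polytope :: "(real^'n) set \<Rightarrow> bool" where
  "nonsingular_polytope P \<longleftrightarrow>
     (\<forall>v. v extreme_point_of P \<longrightarrow>
        card {E. is_edge_of E P \<and> v \<in> E} = CARD('n) \<and>
        {z. lattice_point z} \<subseteq>
          int_span {w - v | w E. is_edge_of E P \<and> v \<in> E \<and> w \<in> E \<and> lattice_point w})"

text \<open>A triangulation is given as a set of simplices, each represented by its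
  (affinely independent) vertex set.\<close>
definition triangulation :: "(real^'n) set set \<Rightarrow> (real^'n) set \<Rightarrow> (real^'n) set \<Rightarrow> bool" where
  "triangulation T P A \<longleftrightarrow>
     finite T \<and>
     (\<forall>S\<in>T. S \<noteq> {} \<and> S \<subseteq> A \<and> \<not> affine_dependent S) \<and>
     (\<forall>S\<in>T. \<forall>S'. S' \<noteq> {} \<and> S' \<subseteq> S \<longrightarrow> S' \<in> T) \<and>
     \<Union>((\<lambda>S. convex hull S) ` T) = P \<and>
     (\<forall>S\<in>T. \<forall>S'\<in>T. convex hull S \<inter> convex hull S' = convex hull (S \<inter> S'))"

definition max_simplex :: "(real^'n) set set \<Rightarrow> (real^'n) set \<Rightarrow> bool" where
  "max_simplex T S \<longleftrightarrow> S \<in> T \<and> (\<nexists>S'. S' \<in> T \<and> S \<subset> S')"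

definition tri_vertices :: "(real^'n) set set \<Rightarrow> (real^'n) set" where
  "tri_vertices T = \<Union>T"

definition central :: "(real^'n) set set \<Rightarrow> bool" where
  "central T \<longleftrightarrow> (\<forall>S. max_simplex T S \<longrightarrow> 0 \<in> S)"

definition affine_on :: "(real^'n) set \<Rightarrow> (real^'n \<Rightarrow> real) \<Rightarrow> bool" where
  "affine_on C h \<longleftrightarrow> (\<exists>a b. \<forall>x\<in>C. h x = a \<bullet> x + b)"

definition max_linearity_domain ::
    "(real^'n) set \<Rightarrow> (real^'n \<Rightarrow> real) \<Rightarrow> (real^'n) set \<Rightarrow> bool" where
  "max_linearity_domain P h C \<longleftrightarrow>
     convex C \<and> C \<subseteq> P \<and> affine_on C h \<and>
     (\<forall>C'. convex C' \<and> C \<subseteq> C' \<and> C' \<subseteq> P \<and> affine_on C' h \<longrightarrow> C' = C)"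

definition linearity_domains_are_max_simplices ::
    "(real^'n) set set \<Rightarrow> (real^'n) set \<Rightarrow> (real^'n \<Rightarrow> real) \<Rightarrow> bool" where
  "linearity_domains_are_max_simplices T P h \<longleftrightarrow>
     (\<forall>C. max_linearity_domain P h C \<longleftrightarrow> (\<exists>S. max_simplex T S \<and> C = convex hull S))"

text \<open>"Convex" in the sense of the paper (psi(tx+(1-t)y) >= t psi x + (1-t) psi y)
  is concave_on in the library's terminology.\<close>
definition coherent :: "(real^'n) set set \<Rightarrow> (real^'n) set \<Rightarrow> bool" where
  "coherent T P \<longleftrightarrow>
     (\<exists>h. (\<forall>S\<in>T. affine_on (convex hull S) h) \<and> concave_on P h \<and>
          linearity_domains_are_max_simplices T P h)"

definition pl_interpolates ::
    "(real^'n) set set \<Rightarrow> (real^'n \<Rightarrow> real) \<Rightarrow> (real^'n \<Rightarrow> real) \<Rightarrow> bool" where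
  "pl_interpolates T l h \<longleftrightarrow>
     (\<forall>S\<in>T. \<forall>c. (\<forall>v\<in>S. 0 \<le> c v) \<and> sum c S = 1 \<longrightarrow>
        h (\<Sum>v\<in>S. c v *\<^sub>R v) = (\<Sum>v\<in>S. c v * l v))"

definition boundary_tri :: "(real^'n) set set \<Rightarrow> (real^'n) set \<Rightarrow> (real^'n) set set" where
  "boundary_tri T P = {S\<in>T. convex hull S \<subseteq> frontier P}"

definition barycenter :: "(real^'n) set \<Rightarrow> real^'n" where
  "barycenter S = (1 / real (card S)) *\<^sub>R (\<Sum>v\<in>S. v)"

definition chain_in :: "'a set set \<Rightarrow> 'a set set \<Rightarrow> bool" where
  "chain_in K C \<longleftrightarrow> C \<noteq> {} \<and> finite C \<and> C \<subseteq> K \<and>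
     (\<forall>X\<in>C. \<forall>Y\<in>C. X \<subseteq> Y \<or> Y \<subseteq> X)"

definition barycentric_subdivision :: "(real^'n) set set \<Rightarrow> (real^'n) set set" where
  "barycentric_subdivision K = {barycenter ` C | C. chain_in K C}"

text \<open>V^0_tau: union of the simplices of the second barycentric subdivision of
  the boundary triangulation having O(tau) as a vertex.\<close>
definition V0 :: "(real^'n) set set \<Rightarrow> (real^'n) set \<Rightarrow> (real^'n) set \<Rightarrow> (real^'n) set" where
  "V0 T P \<tau> = \<Union>{convex hull Q | Q. Q \<in> barycentric_subdivision
        (barycentric_subdivision (boundary_tri T P)) \<and> barycenter \<tau> \<in> Q}"

fun Ck_on :: "nat \<Rightarrow> 'a::real_normed_vector set \<Rightarrow> ('a \<Rightarrow> real) \<Rightarrow> bool" where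
  "Ck_on 0 U f \<longleftrightarrow> continuous_on U f"
| "Ck_on (Suc k) U f \<longleftrightarrow>
     (\<exists>f'. (\<forall>x\<in>U. (f has_derivative f' x) (at x)) \<and> (\<forall>v. Ck_on k U (\<lambda>x. f' x v)))"

definition smooth_on :: "'a::real_normed_vector set \<Rightarrow> ('a \<Rightarrow> real) \<Rightarrow> bool" where
  "smooth_on S f \<longleftrightarrow>
     (\<exists>U g. open U \<and> S \<subseteq> U \<and> (\<forall>k. Ck_on k U g) \<and> (\<forall>x\<in>S. g x = f x))"

definition rho :: "(real^'n) set set \<Rightarrow> (real^'n) set \<Rightarrow> ((real^'n) set \<Rightarrow> real^'n \<Rightarrow> real)
    \<Rightarrow> real^'n \<Rightarrow> real^'n \<Rightarrow> real" where
  "rho T P rho0 \<omega> s =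
     (if \<omega> = 0 then 1
      else if \<omega> \<in> tri_vertices (boundary_tri T P)
      then (\<Sum>\<tau>\<in>{\<tau>\<in>boundary_tri T P. \<omega> \<in> \<tau>}. rho0 \<tau> s)
      else 0)"

end

theory Submission
  imports Defs "HOL-Real_Asymp.Real_Asymp"
begin

lemma Ck_Suc_imp: "Ck_on (Suc k) U f \<Longrightarrow> Ck_on k U f"
proof (induction k arbitrary: f)
  case 0
  then obtain f' where d: "\<forall>x\<in>U. (f has_derivative f' x) (at x)" by auto
  show ?case
    using d by (auto intro!: has_derivative_continuous continuous_at_imp_continuous_on)
next
  case (Suc k)
  then obtain f' where d: "\<forall>x\<in>U. (f has_derivative f' x) (at x)"
    and c: "\<forall>v. Ck_on (Suc k) U (\<lambda>x. f' x v)" by auto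
  then show ?case using Suc.IH by auto
qed

lemma Ck_SucI:
  "(\<And>x. x \<in> U \<Longrightarrow> (f has_derivative f' x) (at x)) \<Longrightarrow> (\<And>v. Ck_on k U (\<lambda>x. f' x v)) \<Longrightarrow> Ck_on (Suc k) U f"
  by auto

lemma Ck_const: "Ck_on k U (\<lambda>x. c)"
proof (induction k arbitrary: c)
  case 0 then show ?case by simp
next
  case (Suc k)
  show ?case by (rule Ck_on.simps(2)[THEN iffD2], rule exI[of _ "\<lambda>x v. 0"]) (auto simp: Suc.IH)
qed

lemma Ck_bounded_linear: "bounded_linear l \<Longrightarrow> Ck_on k U l"
proof (induction k)
  case 0 then show ?case by (simp add: linear_continuous_on)
next
  case (Suc k)
  show ?case
    by (rule Ck_on.simps(2)[THEN iffD2], rule exI[of _ "\<lambda>x v. l v"])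
      (auto simp: Ck_const bounded_linear.has_derivative[OF Suc.prems has_derivative_ident])
qed

lemma Ck_subset: "Ck_on k U f \<Longrightarrow> V \<subseteq> U \<Longrightarrow> Ck_on k V f"
proof (induction k arbitrary: f)
  case 0 then show ?case by (auto intro: continuous_on_subset)
next
  case (Suc k)
  then obtain f' where d: "\<forall>x\<in>U. (f has_derivative f' x) (at x)"
    and c: "\<forall>v. Ck_on k U (\<lambda>x. f' x v)" by auto
  show ?case
    by (rule Ck_on.simps(2)[THEN iffD2], rule exI[of _ f']) (use d c Suc in auto)
qed

lemma Ck_add: "Ck_on k U f \<Longrightarrow> Ck_on k U g \<Longrightarrow> Ck_on k U (\<lambda>x. f x + g x)"
proof (induction k arbitrary: f g)
  case 0 then show ?case by (auto intro: continuous_on_add)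
next
  case (Suc k)
  obtain f' where df: "\<forall>x\<in>U. (f has_derivative f' x) (at x)"
    and cf: "\<forall>v. Ck_on k U (\<lambda>x. f' x v)" using Suc.prems by auto
  obtain g' where dg: "\<forall>x\<in>U. (g has_derivative g' x) (at x)"
    and cg: "\<forall>v. Ck_on k U (\<lambda>x. g' x v)" using Suc.prems by auto
  show ?case
    by (rule Ck_on.simps(2)[THEN iffD2], rule exI[of _ "\<lambda>x v. f' x v + g' x v"])
      (use df dg cf cg Suc.IH in \<open>auto intro: has_derivative_add\<close>)
qed

lemma Ck_mult: "Ck_on k U f \<Longrightarrow> Ck_on k U g \<Longrightarrow> Ck_on k U (\<lambda>x. f x * g x)"
proof (induction k arbitrary: f g)
  case 0 then show ?case by (auto intro: continuous_on_mult)
next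
  case (Suc k)
  obtain f' where df: "\<forall>x\<in>U. (f has_derivative f' x) (at x)"
    and cf: "\<forall>v. Ck_on k U (\<lambda>x. f' x v)" using Suc.prems by auto
  obtain g' where dg: "\<forall>x\<in>U. (g has_derivative g' x) (at x)"
    and cg: "\<forall>v. Ck_on k U (\<lambda>x. g' x v)" using Suc.prems by auto
  have f: "Ck_on k U f" and g: "Ck_on k U g" using Suc.prems Ck_Suc_imp by blast+
  have D: "\<forall>x\<in>U. ((\<lambda>x. f x * g x) has_derivative (\<lambda>v. f x * g' x v + f' x v * g x)) (at x)"
    using df dg by (auto intro!: has_derivative_mult)
  have C: "\<forall>v. Ck_on k U (\<lambda>x. f x * g' x v + f' x v * g x)"
  proof
    fix v
    show "Ck_on k U (\<lambda>x. f x * g' x v + f' x v * g x)"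
      by (rule Ck_add; rule Suc.IH) (use f g cf cg in auto)
  qed
  show ?case by (rule Ck_SucI) (use D C in \<open>blast+\<close>)
qed

lemma Ck_cmult: "Ck_on k U f \<Longrightarrow> Ck_on k U (\<lambda>x. c * f x)"
  using Ck_mult[OF Ck_const] by blast

lemma Ck_minus: "Ck_on k U f \<Longrightarrow> Ck_on k U (\<lambda>x. - f x)"
  using Ck_cmult[of k U f "-1"] by simp

lemma Ck_diff: "Ck_on k U f \<Longrightarrow> Ck_on k U g \<Longrightarrow> Ck_on k U (\<lambda>x. f x - g x)"
  using Ck_add[OF _ Ck_minus, of k U f g] by simp

lemma Ck_sum: "finite I \<Longrightarrow> (\<And>i. i \<in> I \<Longrightarrow> Ck_on k U (f i)) \<Longrightarrow> Ck_on k U (\<lambda>x. \<Sum>i\<in>I. f i x)"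
  by (induction I rule: finite_induct) (auto intro: Ck_add simp: Ck_const)

lemma Ck_exp: "Ck_on k U f \<Longrightarrow> Ck_on k U (\<lambda>x. exp (f x))"
proof (induction k arbitrary: f)
  case 0 then show ?case by (auto intro: continuous_on_exp)
next
  case (Suc k)
  obtain f' where df: "\<forall>x\<in>U. (f has_derivative f' x) (at x)"
    and cf: "\<forall>v. Ck_on k U (\<lambda>x. f' x v)" using Suc.prems by auto
  have f: "Ck_on k U f" using Suc.prems Ck_Suc_imp by blast
  have D: "\<forall>x\<in>U. ((\<lambda>x. exp (f x)) has_derivative (\<lambda>v. exp (f x) * f' x v)) (at x)"
    using df by (auto intro!: derivative_eq_intros)
  have C: "\<forall>v. Ck_on k U (\<lambda>x. exp (f x) * f' x v)"
    using Suc.IH[OF f] cf by (auto intro!: Ck_mult)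
  show ?case by (rule Ck_SucI) (use D C in \<open>blast+\<close>)
qed

lemma Ck_inverse: "Ck_on k U f \<Longrightarrow> (\<And>x. x \<in> U \<Longrightarrow> f x \<noteq> 0) \<Longrightarrow> Ck_on k U (\<lambda>x. inverse (f x))"
proof (induction k arbitrary: f)
  case 0 then show ?case by (auto intro: continuous_on_inverse)
next
  case (Suc k)
  obtain f' where df: "\<forall>x\<in>U. (f has_derivative f' x) (at x)"
    and cf: "\<forall>v. Ck_on k U (\<lambda>x. f' x v)" using Suc.prems by auto
  have f: "Ck_on k U f" using Suc.prems Ck_Suc_imp by blast
  have i: "Ck_on k U (\<lambda>x. inverse (f x))" using Suc.IH[OF f] Suc.prems by blast
  have D: "\<forall>x\<in>U. ((\<lambda>x. inverse (f x)) has_derivative (\<lambda>v. - (inverse (f x) * f' x v * inverse (f x)))) (at x)"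
    using df Suc.prems by (auto intro!: has_derivative_inverse)
  have C: "\<forall>v. Ck_on k U (\<lambda>x. - (inverse (f x) * f' x v * inverse (f x)))"
    using i cf by (auto intro!: Ck_mult Ck_minus)
  show ?case by (rule Ck_SucI) (use D C in \<open>blast+\<close>)
qed

lemma Ck_divide: "Ck_on k U f \<Longrightarrow> Ck_on k U g \<Longrightarrow> (\<And>x. x \<in> U \<Longrightarrow> g x \<noteq> 0) \<Longrightarrow> Ck_on k U (\<lambda>x. f x / g x)"
  unfolding divide_inverse by (intro Ck_mult Ck_inverse) auto

lemma Ck_ln: "Ck_on k U f \<Longrightarrow> (\<And>x. x \<in> U \<Longrightarrow> f x > 0) \<Longrightarrow> Ck_on k U (\<lambda>x. ln (f x))"
proof (induction k arbitrary: f)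
  case 0 then show ?case by (auto intro!: continuous_on_ln dest: less_imp_neq[symmetric])
next
  case (Suc k)
  obtain f' where df: "\<forall>x\<in>U. (f has_derivative f' x) (at x)"
    and cf: "\<forall>v. Ck_on k U (\<lambda>x. f' x v)" using Suc.prems by auto
  have f: "Ck_on k U f" using Suc.prems Ck_Suc_imp by blast
  have i: "Ck_on k U (\<lambda>x. f x)" using f by blast
  have D: "\<forall>x\<in>U. ((\<lambda>x. ln (f x)) has_derivative (\<lambda>v. f' x v / f x)) (at x)"
    using df Suc.prems by (auto intro!: derivative_eq_intros simp: divide_inverse mult.commute)
  have nz: "\<And>x. x \<in> U \<Longrightarrow> f x \<noteq> 0" using Suc.prems(2) by (metis less_irrefl)
  have C: "\<forall>v. Ck_on k U (\<lambda>x. f' x v / f x)"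
    using f cf nz by (auto intro!: Ck_divide)
  show ?case by (rule Ck_SucI) (use D C in \<open>blast+\<close>)
qed

lemma Ck_fst:
  fixes g :: "'a::real_normed_vector \<Rightarrow> real"
  shows "Ck_on k U0 g \<Longrightarrow> fst ` U \<subseteq> U0 \<Longrightarrow> Ck_on k (U :: ('a \<times> 'b::real_normed_vector) set) (\<lambda>p. g (fst p))"
proof (induction k arbitrary: g)
  case 0 then show ?case
    by (auto intro!: continuous_on_compose2[of U0 g U fst] continuous_intros)
next
  case (Suc k)
  obtain g' where dg: "\<forall>x\<in>U0. (g has_derivative g' x) (at x)"
    and cg: "\<forall>v. Ck_on k U0 (\<lambda>x. g' x v)" using Suc.prems by auto
  have "((\<lambda>p. g (fst p)) has_derivative (\<lambda>h. g' (fst p) (fst h))) (at p)" if "p \<in> U" for p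
    using has_derivative_compose[OF has_derivative_fst[OF has_derivative_ident], of g "g' (fst p)" p UNIV]
      dg that Suc.prems by auto
  moreover have "Ck_on k U (\<lambda>p. g' (fst p) (fst v))" for v
    using Suc.IH[of "\<lambda>x. g' x (fst v)"] cg Suc.prems by auto
  ultimately show ?case
    by (intro Ck_on.simps(2)[THEN iffD2] exI[of _ "\<lambda>p v. g' (fst p) (fst v)"]) auto
qed

definition ellf :: "real \<Rightarrow> ('a \<Rightarrow> 'a \<Rightarrow> real) \<Rightarrow> 'a \<Rightarrow> 'a \<Rightarrow> real \<Rightarrow> real" where
  "ellf \<epsilon> Rf v s \<gamma> = ln (Rf v s * (1 - exp (-(\<epsilon>*\<gamma>))) + exp (-(\<epsilon>*\<gamma>)))"

definition mfun :: "'a set set \<Rightarrow> ('a set \<Rightarrow> 'a \<Rightarrow> real) \<Rightarrow> 'a set \<Rightarrow> 'a \<Rightarrow> real" where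
  "mfun bd r F s = (\<Sum>\<tau>\<in>{\<tau>\<in>bd. \<not> \<tau> \<subseteq> F}. r \<tau> s)"

definition wfun :: "'a set set \<Rightarrow> ('a set \<Rightarrow> 'a \<Rightarrow> real) \<Rightarrow> 'a set \<Rightarrow> 'a \<Rightarrow> real \<Rightarrow> real" where
  "wfun bd r F s \<gamma> = exp (-(\<gamma>\<^sup>2 * mfun bd r F s))"

definition thfun :: "'a set set \<Rightarrow> 'a set set \<Rightarrow> ('a set \<Rightarrow> 'a \<Rightarrow> real) \<Rightarrow> 'a set \<Rightarrow> 'a \<Rightarrow> real \<Rightarrow> real" where
  "thfun Fam bd r F s \<gamma> = wfun bd r F s \<gamma> / (\<Sum>G\<in>Fam. wfun bd r G s \<gamma>)"

definition chiC :: "'a::real_inner set set \<Rightarrow> 'a set set \<Rightarrow> real \<Rightarrow> real \<Rightarrow> ('a set \<Rightarrow> 'a) \<Rightarrow> ('a set \<Rightarrow> 'a \<Rightarrow> 'a)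
    \<Rightarrow> ('a \<Rightarrow> 'a \<Rightarrow> real) \<Rightarrow> ('a set \<Rightarrow> 'a \<Rightarrow> real) \<Rightarrow> 'a \<Rightarrow> real \<Rightarrow> 'a \<Rightarrow> real" where
  "chiC Fam bd \<epsilon> l0 u d Rf r s \<gamma> \<omega> = \<gamma> * l0 +
     (\<Sum>F\<in>Fam. thfun Fam bd r F s \<gamma> * (\<gamma> * (u F \<bullet> \<omega>) - (\<Sum>v\<in>F. ellf \<epsilon> Rf v s \<gamma> * (d F v \<bullet> \<omega>))))"

lemma xexp_le: "0 \<le> (x::real) \<Longrightarrow> x * exp (-x) \<le> 1"
proof -
  assume "0 \<le> x"
  have "x \<le> exp x" using exp_ge_add_one_self[of x] by linarith
  then have "x * exp (-x) \<le> exp x * exp (-x)" by (simp add: mult_right_mono)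
  also have "\<dots> = 1" by (simp add: exp_minus)
  finally show ?thesis .
qed

lemma chi_bound:
  fixes \<omega> s :: "'a::real_inner"
  assumes finFam: "finite Fam" and neFam: "Fam \<noteq> {}" and finF: "\<forall>F\<in>Fam. finite F"
    and dual: "\<forall>F\<in>Fam. \<forall>v\<in>F. \<forall>w\<in>F. d F v \<bullet> w = (if v = w then 1 else 0)"
    and ueq: "\<forall>F\<in>Fam. \<forall>v\<in>F. u F \<bullet> v = lp v"
    and sep: "\<forall>F\<in>Fam. \<omega> \<notin> F \<longrightarrow> lp \<omega> + \<delta> \<le> u F \<bullet> \<omega>"
    and Bb: "\<forall>F\<in>Fam. (\<Sum>v\<in>F. \<bar>d F v \<bullet> \<omega>\<bar>) \<le> B"
    and Mb: "\<forall>F\<in>Fam. \<bar>lp \<omega> - u F \<bullet> \<omega>\<bar> \<le> M"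
    and eps: "0 < \<epsilon>" "\<epsilon> * (B + 1) \<le> \<delta>"
    and Rb: "\<forall>v. 0 \<le> Rf v s \<and> Rf v s \<le> 1"
    and cover: "\<exists>G\<in>Fam. \<forall>\<tau>\<in>bd. r \<tau> s \<noteq> 0 \<longrightarrow> \<tau> \<subseteq> G"
    and Rle: "\<forall>F\<in>Fam. \<omega> \<notin> F \<longrightarrow> Rf \<omega> s \<le> mfun bd r F s"
    and gpos: "0 < \<gamma>"
  shows "\<bar>exp (\<gamma> * lp \<omega> - (chiC Fam bd \<epsilon> l0 u d Rf r s \<gamma> \<omega> - \<gamma> * l0)) - Rf \<omega> s\<bar>
           \<le> exp (-(\<epsilon>*\<gamma>)) + (M + \<epsilon> * B) * card Fam / \<gamma>"
proof -
  define E where "E = exp (-(\<epsilon>*\<gamma>))"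
  have E0: "0 < E" and E1: "E \<le> 1" using eps gpos by (auto simp: E_def)
  define ll where "ll v = ellf \<epsilon> Rf v s \<gamma>" for v
  have argb: "E \<le> Rf v s * (1 - E) + E" "Rf v s * (1 - E) + E \<le> 1" for v
  proof -
    have "0 \<le> Rf v s * (1 - E)" using Rb E1 by simp
    then show "E \<le> Rf v s * (1 - E) + E" by simp
    have "Rf v s * (1 - E) \<le> 1 * (1 - E)" using Rb E1 by (intro mult_right_mono) auto
    then show "Rf v s * (1 - E) + E \<le> 1" by simp
  qed
  have lb: "-(\<epsilon>*\<gamma>) \<le> ll v" "ll v \<le> 0" for v
  proof -
    have "ln E \<le> ll v" unfolding ll_def ellf_def E_def[symmetric]
      using argb[of v] E0 by (subst ln_le_cancel_iff) auto
    then show "-(\<epsilon>*\<gamma>) \<le> ll v" by (simp add: E_def)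
    show "ll v \<le> 0" unfolding ll_def ellf_def E_def[symmetric]
      using argb[of v] E0 by (subst ln_le_zero_iff) auto
  qed
  have labs: "\<bar>ll v\<bar> \<le> \<epsilon>*\<gamma>" for v using lb[of v] by auto
  have explw: "exp (ll \<omega>) = Rf \<omega> s * (1 - E) + E"
    unfolding ll_def ellf_def E_def[symmetric] using argb[of \<omega>] E0 by simp
  define w where "w F = wfun bd r F s \<gamma>" for F
  define W where "W = (\<Sum>G\<in>Fam. w G)"
  have wpos: "0 < w F" for F by (simp add: w_def wfun_def)
  have W1: "1 \<le> W"
  proof -
    obtain G where G: "G \<in> Fam" "\<forall>\<tau>\<in>bd. r \<tau> s \<noteq> 0 \<longrightarrow> \<tau> \<subseteq> G" using cover by blast
    have "mfun bd r G s = 0" unfolding mfun_def using G(2) by (intro sum.neutral) auto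
    then have "w G = 1" by (simp add: w_def wfun_def)
    moreover have "w G \<le> W" unfolding W_def
      using G(1) finFam wpos by (intro member_le_sum) (auto intro: less_imp_le)
    ultimately show ?thesis by simp
  qed
  define \<theta> where "\<theta> F = w F / W" for F
  have th_eq: "thfun Fam bd r F s \<gamma> = \<theta> F" for F
    by (simp add: thfun_def \<theta>_def w_def W_def)
  have th0: "0 \<le> \<theta> F" for F using wpos W1 by (simp add: \<theta>_def less_imp_le)
  have thsum: "(\<Sum>F\<in>Fam. \<theta> F) = 1"
    using W1 by (simp add: \<theta>_def W_def sum_divide_distrib[symmetric])
  have thle: "\<theta> F \<le> w F" for F
    using W1 wpos[of F] by (simp add: \<theta>_def divide_le_eq less_imp_le mult_le_cancel_left1)
  define L where "L F = \<gamma> * lp \<omega> - (\<gamma> * (u F \<bullet> \<omega>) - (\<Sum>v\<in>F. ll v * (d F v \<bullet> \<omega>)))" for F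
  have X_eq: "\<gamma> * lp \<omega> - (chiC Fam bd \<epsilon> l0 u d Rf r s \<gamma> \<omega> - \<gamma> * l0) = (\<Sum>F\<in>Fam. \<theta> F * L F)"
  proof -
    have "(\<Sum>F\<in>Fam. \<theta> F * L F) = (\<Sum>F\<in>Fam. \<theta> F * (\<gamma> * lp \<omega>)) -
        (\<Sum>F\<in>Fam. \<theta> F * (\<gamma> * (u F \<bullet> \<omega>) - (\<Sum>v\<in>F. ll v * (d F v \<bullet> \<omega>))))"
      by (simp add: L_def right_diff_distrib sum_subtractf)
    also have "(\<Sum>F\<in>Fam. \<theta> F * (\<gamma> * lp \<omega>)) = \<gamma> * lp \<omega>"
      by (simp add: sum_distrib_right[symmetric] thsum)
    finally show ?thesis
      by (simp add: chiC_def th_eq ll_def)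
  qed
  define K where "K = M + \<epsilon> * B"
  have Lin: "L F = ll \<omega>" if "F \<in> Fam" "\<omega> \<in> F" for F
  proof -
    have "(\<Sum>v\<in>F. ll v * (d F v \<bullet> \<omega>)) = (\<Sum>v\<in>F. if v = \<omega> then ll v else 0)"
      using dual that by (intro sum.cong) auto
    also have "\<dots> = ll \<omega>" using that finF by simp
    finally show ?thesis using ueq that by (simp add: L_def)
  qed
  have Lout: "L F \<le> -(\<epsilon>*\<gamma>) \<and> -(K*\<gamma>) \<le> L F" if "F \<in> Fam" "\<omega> \<notin> F" for F
  proof -
    have "\<bar>\<Sum>v\<in>F. ll v * (d F v \<bullet> \<omega>)\<bar> \<le> (\<Sum>v\<in>F. \<bar>ll v * (d F v \<bullet> \<omega>)\<bar>)" by (rule sum_abs)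
    also have "\<dots> \<le> (\<Sum>v\<in>F. (\<epsilon>*\<gamma>) * \<bar>d F v \<bullet> \<omega>\<bar>)"
      by (intro sum_mono) (simp add: abs_mult labs mult_right_mono)
    also have "\<dots> = (\<epsilon>*\<gamma>) * (\<Sum>v\<in>F. \<bar>d F v \<bullet> \<omega>\<bar>)" by (simp add: sum_distrib_left)
    also have "\<dots> \<le> (\<epsilon>*\<gamma>) * B" using Bb that eps gpos by (intro mult_left_mono) auto
    finally have S: "\<bar>\<Sum>v\<in>F. ll v * (d F v \<bullet> \<omega>)\<bar> \<le> \<epsilon> * \<gamma> * B" .
    have L2: "L F = \<gamma> * (lp \<omega> - u F \<bullet> \<omega>) + (\<Sum>v\<in>F. ll v * (d F v \<bullet> \<omega>))"
      by (simp add: L_def algebra_simps)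
    have "lp \<omega> - u F \<bullet> \<omega> \<le> -\<delta>" using sep that by auto
    then have a: "\<gamma> * (lp \<omega> - u F \<bullet> \<omega>) \<le> \<gamma> * (-\<delta>)" using gpos by (intro mult_left_mono) auto
    have "\<gamma> * (\<epsilon> * (B + 1)) \<le> \<gamma> * \<delta>" using eps gpos by (intro mult_left_mono) auto
    then have "L F \<le> -(\<epsilon>*\<gamma>)" using a S L2 by (simp add: algebra_simps)
    moreover have "\<bar>\<gamma> * (lp \<omega> - u F \<bullet> \<omega>)\<bar> \<le> \<gamma> * M"
      using Mb that gpos by (simp add: abs_mult mult_left_mono)
    then have "-(K*\<gamma>) \<le> L F" using S L2 by (simp add: K_def algebra_simps)
    ultimately show ?thesis by blast
  qed
  have "(\<Sum>F\<in>Fam. \<theta> F * L F) \<le> (\<Sum>F\<in>Fam. \<theta> F * ll \<omega>)"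
  proof (intro sum_mono mult_left_mono th0)
    fix F assume F: "F \<in> Fam"
    show "L F \<le> ll \<omega>"
    proof (cases "\<omega> \<in> F")
      case True then show ?thesis using Lin F by simp
    next
      case False then show ?thesis using Lout[OF F False] lb[of \<omega>] by linarith
    qed
  qed
  also have "\<dots> = ll \<omega>" by (simp add: sum_distrib_right[symmetric] thsum)
  finally have up: "(\<Sum>F\<in>Fam. \<theta> F * L F) \<le> ll \<omega>" .
  have upper: "exp (\<Sum>F\<in>Fam. \<theta> F * L F) - Rf \<omega> s \<le> E"
  proof -
    have "exp (\<Sum>F\<in>Fam. \<theta> F * L F) \<le> exp (ll \<omega>)" using up by simp
    also have "\<dots> = Rf \<omega> s * (1 - E) + E" by (rule explw)
    also have "\<dots> \<le> Rf \<omega> s + E" using Rb E0 by (simp add: algebra_simps)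
    finally show ?thesis by simp
  qed
  define R where "R = Rf \<omega> s"
  have R01: "0 \<le> R" "R \<le> 1" using Rb by (auto simp: R_def)
  have wle: "w F \<le> exp (-(\<gamma>\<^sup>2 * R))" if "F \<in> Fam" "\<omega> \<notin> F" for F
  proof -
    have "\<gamma>\<^sup>2 * R \<le> \<gamma>\<^sup>2 * mfun bd r F s" using Rle that by (auto simp: R_def intro: mult_left_mono)
    then show ?thesis by (simp add: w_def wfun_def)
  qed
  have K0: "0 \<le> K"
  proof -
    obtain F where "F \<in> Fam" using neFam by blast
    then have "0 \<le> M" "0 \<le> B" using Mb Bb by (auto intro: order_trans[OF abs_ge_zero] order_trans[OF sum_nonneg])
    then show ?thesis using eps by (simp add: K_def)
  qed
  define y where "y = K * \<gamma> * (card Fam * exp (-(\<gamma>\<^sup>2 * R)))"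
  have y0: "0 \<le> y" using K0 gpos by (simp add: y_def)
  have "(\<Sum>F\<in>Fam. \<theta> F * L F) \<ge> (\<Sum>F\<in>Fam. \<theta> F * ll \<omega> - (if \<omega> \<in> F then 0 else K * \<gamma> * exp (-(\<gamma>\<^sup>2 * R))))"
  proof (intro sum_mono)
    fix F assume F: "F \<in> Fam"
    show "\<theta> F * ll \<omega> - (if \<omega> \<in> F then 0 else K * \<gamma> * exp (-(\<gamma>\<^sup>2 * R))) \<le> \<theta> F * L F"
    proof (cases "\<omega> \<in> F")
      case True then show ?thesis using Lin F by simp
    next
      case False
      have "\<theta> F * ll \<omega> \<le> 0" using th0[of F] lb[of \<omega>] by (simp add: mult_nonneg_nonpos)
      moreover have "\<theta> F * (K*\<gamma>) \<le> exp (-(\<gamma>\<^sup>2 * R)) * (K*\<gamma>)"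
        using thle[of F] wle[OF F False] K0 gpos by (intro mult_right_mono) auto
      moreover have "\<theta> F * (-(K*\<gamma>)) \<le> \<theta> F * L F" using Lout[OF F False] th0[of F] by (intro mult_left_mono) auto
      ultimately show ?thesis using False by (simp add: algebra_simps)
    qed
  qed
  also have "(\<Sum>F\<in>Fam. \<theta> F * ll \<omega> - (if \<omega> \<in> F then 0 else K * \<gamma> * exp (-(\<gamma>\<^sup>2 * R))))
      \<ge> ll \<omega> - y"
  proof -
    have "(\<Sum>F\<in>Fam. (if \<omega> \<in> F then 0 else K * \<gamma> * exp (-(\<gamma>\<^sup>2 * R)))) \<le> (\<Sum>F\<in>Fam. K * \<gamma> * exp (-(\<gamma>\<^sup>2 * R)))"
      using K0 gpos by (intro sum_mono) auto
    also have "\<dots> = y" by (simp add: y_def)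
    finally show ?thesis
      by (simp add: sum_subtractf sum_distrib_right[symmetric] thsum)
  qed
  finally have low: "ll \<omega> - y \<le> (\<Sum>F\<in>Fam. \<theta> F * L F)" .
  have Ry: "R * y \<le> K * card Fam / \<gamma>"
  proof -
    have "R * y = (K * card Fam / \<gamma>) * ((\<gamma>\<^sup>2 * R) * exp (-(\<gamma>\<^sup>2 * R)))"
      using gpos by (simp add: y_def power2_eq_square field_simps)
    also have "\<dots> \<le> (K * card Fam / \<gamma>) * 1"
      using K0 gpos R01 by (intro mult_left_mono xexp_le) auto
    finally show ?thesis by simp
  qed
  have lower: "Rf \<omega> s - exp (\<Sum>F\<in>Fam. \<theta> F * L F) \<le> K * card Fam / \<gamma>"
  proof -
    have "exp (ll \<omega> - y) \<le> exp (\<Sum>F\<in>Fam. \<theta> F * L F)" using low by simp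
    moreover have "exp (ll \<omega> - y) = exp (ll \<omega>) * exp (-y)" by (simp add: exp_diff exp_minus field_simps)
    moreover have "R \<le> exp (ll \<omega>)"
    proof -
      have "E * R \<le> E * 1" using E0 R01 by (intro mult_left_mono) auto
      then show ?thesis using explw by (simp add: R_def algebra_simps)
    qed
    moreover have "1 - y \<le> exp (-y)" using exp_ge_add_one_self[of "-y"] by simp
    ultimately have "R * exp (-y) \<le> exp (\<Sum>F\<in>Fam. \<theta> F * L F)" and "R * (1 - y) \<le> R * exp (-y)"
      using R01 by (auto intro: order_trans[OF mult_right_mono] mult_left_mono)
    then show ?thesis using Ry by (simp add: R_def algebra_simps)
  qed
  have "0 \<le> K * card Fam / \<gamma>" using K0 gpos by simp
  moreover have "0 < exp (-(\<epsilon>*\<gamma>))" by simp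
  ultimately show ?thesis
    unfolding X_eq using upper lower unfolding E_def K_def abs_le_iff by linarith
qed

lemma Ck_snd: "Ck_on k U (\<lambda>p::'a::real_normed_vector \<times> real. snd p)"
  by (rule Ck_bounded_linear) (rule bounded_linear_snd)

lemma chiC_smooth:
  fixes \<epsilon> :: real and r :: "'a::real_inner set \<Rightarrow> 'a \<Rightarrow> real" and Rf :: "'a \<Rightarrow> 'a \<Rightarrow> real"
  assumes finFam: "finite Fam" and neFam: "Fam \<noteq> {}" and finF: "\<forall>F\<in>Fam. finite F" and finbd: "finite bd"
    and U0: "open U0"
    and rCk: "\<forall>\<tau>\<in>bd. \<forall>k. Ck_on k U0 (r \<tau>)"
    and RCk: "\<forall>v\<in>\<Union>Fam. \<forall>k. Ck_on k U0 (Rf v)"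
  defines "U \<equiv> {p \<in> U0 \<times> UNIV. \<forall>v\<in>\<Union>Fam.
                   0 < Rf v (fst p) * (1 - exp (-(\<epsilon> * snd p))) + exp (-(\<epsilon> * snd p))}"
  shows "open U" "\<forall>k. Ck_on k U (\<lambda>p. chiC Fam bd \<epsilon> l0 u d Rf r (fst p) (snd p) \<omega>)"
proof -
  define arg where "arg v p = Rf v (fst p) * (1 - exp (-(\<epsilon> * snd p))) + exp (-(\<epsilon> * snd p))" for v p
  have fst_sub: "fst ` (U0 \<times> (UNIV::real set)) \<subseteq> U0" by auto
  have argCk: "Ck_on k (U0 \<times> UNIV) (arg v)" if "v \<in> \<Union>Fam" for v k
  proof -
    have e: "Ck_on k (U0 \<times> (UNIV::real set)) (\<lambda>p. exp (-(\<epsilon> * snd p)))"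
      by (intro Ck_exp Ck_minus Ck_cmult Ck_snd)
    have "Ck_on k (U0 \<times> (UNIV::real set)) (\<lambda>p. Rf v (fst p))"
      using RCk that fst_sub by (intro Ck_fst) auto
    then show ?thesis unfolding arg_def
      by (intro Ck_add Ck_mult Ck_diff Ck_const e)
  qed
  have Ueq: "U = (U0 \<times> UNIV) \<inter> (\<Inter>v\<in>\<Union>Fam. (U0 \<times> UNIV) \<inter> arg v -` {0<..})"
    unfolding U_def arg_def by auto
  have finV: "finite (\<Union>Fam)" using finFam finF by auto
  have o1: "open (U0 \<times> (UNIV::real set))" using U0 by (simp add: open_Times)
  have o2: "\<forall>v\<in>\<Union>Fam. open ((U0 \<times> UNIV) \<inter> arg v -` {0<..})"
  proof
    fix v assume "v \<in> \<Union>Fam"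
    then have "continuous_on (U0 \<times> UNIV) (arg v)" using argCk[of v 0] by simp
    then show "open ((U0 \<times> UNIV) \<inter> arg v -` {0<..})" using o1 by (intro continuous_open_preimage) auto
  qed
  show "open U"
    unfolding Ueq by (intro open_Int open_INT finV o1 o2)
  have UU: "U \<subseteq> U0 \<times> UNIV" unfolding U_def by auto
  show "\<forall>k. Ck_on k U (\<lambda>p. chiC Fam bd \<epsilon> l0 u d Rf r (fst p) (snd p) \<omega>)"
  proof
    fix k
    have m: "Ck_on k (U0 \<times> (UNIV::real set)) (\<lambda>p. mfun bd r F (fst p))" for F
      unfolding mfun_def using finbd rCk fst_sub by (intro Ck_sum Ck_fst) auto
    have w: "Ck_on k (U0 \<times> (UNIV::real set)) (\<lambda>p. wfun bd r F (fst p) (snd p))" for F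
      unfolding wfun_def power2_eq_square by (intro Ck_exp Ck_minus Ck_mult Ck_snd m)
    have wpos: "0 < wfun bd r F s g" for F s g by (simp add: wfun_def)
    have Wpos: "(\<Sum>G\<in>Fam. wfun bd r G s g) \<noteq> 0" for s g
      using finFam neFam wpos by (metis less_irrefl sum_pos)
    have th: "Ck_on k (U0 \<times> (UNIV::real set)) (\<lambda>p. thfun Fam bd r F (fst p) (snd p))" for F
      unfolding thfun_def using finFam Wpos by (intro Ck_divide w Ck_sum) auto
    have l: "Ck_on k U (\<lambda>p. ellf \<epsilon> Rf v (fst p) (snd p))" if "v \<in> \<Union>Fam" for v
    proof -
      have a1: "Ck_on k U (arg v)" using argCk[OF that] UU by (rule Ck_subset)
      have a2: "\<And>p. p \<in> U \<Longrightarrow> 0 < arg v p" using that unfolding U_def arg_def by blast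
      have "Ck_on k U (\<lambda>p. ln (arg v p))"
        using a1 a2 by (rule Ck_ln)
      then show ?thesis by (simp add: ellf_def arg_def)
    qed
    show "Ck_on k U (\<lambda>p. chiC Fam bd \<epsilon> l0 u d Rf r (fst p) (snd p) \<omega>)"
      unfolding chiC_def
    proof (intro Ck_add Ck_sum Ck_mult Ck_diff Ck_const Ck_snd finFam)
      fix F assume F: "F \<in> Fam"
      show "Ck_on k U (\<lambda>p. thfun Fam bd r F (fst p) (snd p))" using th UU by (rule Ck_subset)
      show "finite F" using F finF by auto
      fix v assume "v \<in> F"
      then show "Ck_on k U (\<lambda>p. ellf \<epsilon> Rf v (fst p) (snd p))" using F by (intro l) auto
    qed
  qed
qed

lemma support_affine:
  fixes \<psi> :: "'a::euclidean_space \<Rightarrow> real"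
  assumes conc: "concave_on D \<psi>" and x0: "x0 \<in> interior D"
  shows "\<exists>u c. (\<forall>x\<in>D. \<psi> x \<le> c + u \<bullet> x) \<and> \<psi> x0 = c + u \<bullet> x0"
proof -
  have cD: "convex D" using conc by (simp add: concave_on_iff)
  have x0D: "x0 \<in> D" using x0 interior_subset by blast
  define K where "K = {(x, t). x \<in> D \<and> t < \<psi> x}"
  have cK: "convex K"
  proof (rule convexI)
    fix p q :: "'a \<times> real" and a b :: real
    assume p: "p \<in> K" and q: "q \<in> K" and ab0: "0 \<le> a" "0 \<le> b" "a + b = 1"
    then have ab: "0 \<le> a \<and> 0 \<le> b \<and> a + b = 1" by simp
    obtain x1 t1 where p': "p = (x1, t1)" "x1 \<in> D" "t1 < \<psi> x1" using p unfolding K_def by auto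
    obtain x2 t2 where q': "q = (x2, t2)" "x2 \<in> D" "t2 < \<psi> x2" using q unfolding K_def by auto
    have m: "a *\<^sub>R x1 + b *\<^sub>R x2 \<in> D" using cD p' q' ab unfolding convex_def by blast
    have c: "a * \<psi> x1 + b * \<psi> x2 \<le> \<psi> (a *\<^sub>R x1 + b *\<^sub>R x2)"
      using conc p' q' ab unfolding concave_on_iff by blast
    have "a * t1 + b * t2 < a * \<psi> x1 + b * \<psi> x2"
    proof (cases "a = 0")
      case True then show ?thesis using ab q' by simp
    next
      case False
      then have "a * t1 < a * \<psi> x1" using ab p' by simp
      moreover have "b * t2 \<le> b * \<psi> x2" using ab q' by (intro mult_left_mono) auto
      ultimately show ?thesis by simp
    qed
    then show "a *\<^sub>R p + b *\<^sub>R q \<in> K" using m c p' q' unfolding K_def by auto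
  qed
  define p where "p = (x0, \<psi> x0)"
  define S' where "S' = (+) p ` ((\<lambda>x. - x) ` K)"
  have cS': "convex S'" unfolding S'_def by (intro convex_translation convex_negations cK)
  have "0 \<notin> S'" unfolding S'_def p_def K_def by (auto simp: zero_prod_def)
  then obtain a where a0: "a \<noteq> 0" and a: "\<forall>z\<in>S'. 0 \<le> a \<bullet> z"
    using separating_hyperplane_set_0[OF cS'] by blast
  obtain \<alpha> \<beta> where ab: "a = (\<alpha>, \<beta>)" by (cases a)
  have ineq: "0 \<le> \<alpha> \<bullet> (x0 - x) + \<beta> * (\<psi> x0 - t)" if "x \<in> D" "t < \<psi> x" for x t
  proof -
    have "(x, t) \<in> K" unfolding K_def using that by auto
    then have "- (x, t) \<in> (\<lambda>x. - x) ` K" by (rule imageI)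
    then have "p + - (x, t) \<in> S'" unfolding S'_def by (rule imageI)
    then have "0 \<le> a \<bullet> (p + - (x, t))" using a by blast
    then show ?thesis by (simp add: ab p_def inner_diff_right algebra_simps)
  qed
  have b0: "0 \<le> \<beta>" using ineq[OF x0D, of "\<psi> x0 - 1"] by simp
  have bne: "\<beta> \<noteq> 0"
  proof
    assume b: "\<beta> = 0"
    obtain e where e: "e > 0" "ball x0 e \<subseteq> D" using x0 by (auto simp: mem_interior)
    define \<eta> where "\<eta> = e / (2 * (norm \<alpha> + 1))"
    have "0 < 2 * (norm \<alpha> + 1)" by (simp add: add_nonneg_pos)
    then have \<eta>0: "\<eta> > 0" using e unfolding \<eta>_def by (intro divide_pos_pos)
    have "norm (\<eta> *\<^sub>R \<alpha>) < e"
    proof -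
      have "norm (\<eta> *\<^sub>R \<alpha>) = \<eta> * norm \<alpha>" using \<eta>0 by simp
      also have "\<dots> \<le> \<eta> * (norm \<alpha> + 1)" using \<eta>0 by simp
      also have "\<dots> = e / 2" unfolding \<eta>_def using \<open>0 < 2 * (norm \<alpha> + 1)\<close> by (simp add: field_simps)
      finally show ?thesis using e by simp
    qed
    then have "x0 + \<eta> *\<^sub>R \<alpha> \<in> D" using e by (auto simp: dist_norm)
    from ineq[OF this, of "\<psi> (x0 + \<eta> *\<^sub>R \<alpha>) - 1"] b
    have "0 \<le> - (\<eta> * (\<alpha> \<bullet> \<alpha>))" by (simp add: inner_diff_right)
    then have "\<alpha> \<bullet> \<alpha> \<le> 0" using \<eta>0 by (simp add: mult_le_0_iff)
    then have "\<alpha> = 0" using inner_gt_zero_iff[of \<alpha>] by linarith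
    then show False using a0 ab b by (simp add: zero_prod_def)
  qed
  then have bpos: "0 < \<beta>" using b0 by simp
  define u where "u = - ((1 / \<beta>) *\<^sub>R \<alpha>)"
  define c where "c = \<psi> x0 + (\<alpha> \<bullet> x0) / \<beta>"
  have "\<psi> x \<le> c + u \<bullet> x" if x: "x \<in> D" for x
  proof (rule ccontr)
    assume "\<not> ?thesis"
    then have lt: "c + u \<bullet> x < \<psi> x" by simp
    define t where "t = (\<psi> x + (c + u \<bullet> x)) / 2"
    have "t < \<psi> x" "c + u \<bullet> x < t" using lt by (auto simp: t_def)
    from ineq[OF x this(1)] have "\<beta> * t \<le> \<alpha> \<bullet> (x0 - x) + \<beta> * \<psi> x0" by (simp add: algebra_simps)
    then have "t \<le> (\<alpha> \<bullet> (x0 - x) + \<beta> * \<psi> x0) / \<beta>" using bpos by (simp add: le_divide_eq mult.commute)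
    also have "\<dots> = c + u \<bullet> x" using bpos by (simp add: c_def u_def inner_diff_right field_simps)
    finally show False using \<open>c + u \<bullet> x < t\<close> by simp
  qed
  moreover have "\<psi> x0 = c + u \<bullet> x0" using bpos by (simp add: c_def u_def)
  ultimately show ?thesis by blast
qed

lemma dual_vectors:
  fixes F :: "'a::euclidean_space set"
  assumes ind: "independent F" and v: "v \<in> F"
  shows "\<exists>y. \<forall>w\<in>F. y \<bullet> w = (if v = w then 1 else 0)"
proof -
  obtain g :: "'a \<Rightarrow> real" where g: "linear g" "\<forall>x\<in>F. g x = (if v = x then 1 else 0)"
    using linear_independent_extend[OF ind, of "\<lambda>x. if v = x then 1 else 0"] by auto
  define y where "y = (\<Sum>b\<in>Basis. g b *\<^sub>R b)"
  have "y \<bullet> x = g x" for x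
  proof -
    have "g x = g (\<Sum>b\<in>Basis. (x \<bullet> b) *\<^sub>R b)" by (simp only: euclidean_representation)
    also have "\<dots> = (\<Sum>b\<in>Basis. g ((x \<bullet> b) *\<^sub>R b))" by (rule linear_sum[OF g(1)])
    also have "\<dots> = (\<Sum>b\<in>Basis. (x \<bullet> b) * g b)"
      by (intro sum.cong refl) (simp add: linear_scale[OF g(1)])
    also have "\<dots> = y \<bullet> x" unfolding y_def inner_sum_left
      by (intro sum.cong refl) (simp add: inner_commute)
    finally show ?thesis by simp
  qed
  then show ?thesis using g(2) by (intro exI[of _ y]) auto
qed

lemma exists_max_simplex:
  assumes fin: "finite T" and finS: "\<forall>Y\<in>T. finite Y" and X: "X \<in> T"
  shows "\<exists>S. max_simplex T S \<and> X \<subseteq> S"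
proof -
  define Q where "Q = {Y\<in>T. X \<subseteq> Y}"
  have fQ: "finite Q" "Q \<noteq> {}" using fin X by (auto simp: Q_def)
  define m where "m = Max (card ` Q)"
  have "m \<in> card ` Q" unfolding m_def using fQ by (intro Max_in) auto
  then obtain S where S: "S \<in> Q" "card S = m" by blast
  have le: "card Y \<le> m" if "Y \<in> Q" for Y using fQ that by (auto simp: m_def)
  have "\<nexists>S'. S' \<in> T \<and> S \<subset> S'"
  proof
    assume "\<exists>S'. S' \<in> T \<and> S \<subset> S'"
    then obtain S' where S': "S' \<in> T" "S \<subset> S'" by blast
    then have "S' \<in> Q" using S by (auto simp: Q_def)
    moreover have "card S < card S'" using S' finS by (intro psubset_card_mono) auto
    ultimately show False using le S by fastforce
  qed
  then show ?thesis using S by (auto simp: max_simplex_def Q_def)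
qed

lemma max_simplex_support:
  fixes \<Delta> A :: "(real^'n) set" and T :: "(real^'n) set set" and lam :: "real^'n \<Rightarrow> int"
    and \<psi> :: "real^'n \<Rightarrow> real"
  assumes A_fin: "finite A" and A_D: "A \<subseteq> \<Delta>"
    and tri: "triangulation T \<Delta> A" and cent: "central T"
    and psi_interp: "pl_interpolates T (\<lambda>v. real_of_int (lam v)) \<psi>"
    and psi_conv: "concave_on \<Delta> \<psi>"
    and psi_dom: "linearity_domains_are_max_simplices T \<Delta> \<psi>"
    and psi_ge: "\<And>\<omega>. \<omega> \<in> A \<Longrightarrow> \<psi> \<omega> \<ge> real_of_int (lam \<omega>)"
    and psi_eq: "\<And>\<omega>. \<omega> \<in> A \<Longrightarrow> \<psi> \<omega> = real_of_int (lam \<omega>) \<longleftrightarrow> \<omega> \<in> tri_vertices T"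
    and int0: "0 \<in> interior \<Delta>"
    and S: "max_simplex T S"
  shows "\<exists>u. (\<forall>v\<in>S. u \<bullet> v = real_of_int (lam v) - real_of_int (lam 0)) \<and>
             (\<forall>\<omega>\<in>A. \<omega> \<notin> S \<longrightarrow> real_of_int (lam \<omega>) - real_of_int (lam 0) < u \<bullet> \<omega>)"
proof -
  define l where "l v = real_of_int (lam v)" for v
  have cD: "convex \<Delta>" using psi_conv by (simp add: concave_on_iff)
  have ST: "S \<in> T" using S by (simp add: max_simplex_def)
  have SA: "S \<subseteq> A" and Sne: "S \<noteq> {}" using tri ST by (auto simp: triangulation_def)
  have finS: "finite S" using SA A_fin finite_subset by blast
  have S0: "0 \<in> S" using cent S by (simp add: central_def)
  have SD: "S \<subseteq> \<Delta>" using SA A_D by blast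
  have interp: "\<psi> (\<Sum>v\<in>S. c v *\<^sub>R v) = (\<Sum>v\<in>S. c v * l v)"
    if "\<forall>v\<in>S. 0 \<le> c v" "sum c S = 1" for c
    using psi_interp ST that unfolding pl_interpolates_def l_def by blast
  have psiv: "\<psi> v = l v" if "v \<in> S" for v
  proof -
    have "\<psi> (\<Sum>w\<in>S. (if w = v then 1 else 0) *\<^sub>R w) = (\<Sum>w\<in>S. (if w = v then 1 else 0) * l w)"
      using that finS by (intro interp) auto
    moreover have "(\<Sum>w\<in>S. (if w = v then 1 else 0) *\<^sub>R w) = (\<Sum>w\<in>S. if w = v then w else 0)"
      by (intro sum.cong) auto
    moreover have "(\<Sum>w\<in>S. if w = v then w else 0) = v"
      using that finS by (simp add: sum.delta)
    moreover have "(\<Sum>w\<in>S. (if w = v then 1 else 0) * l w) = (\<Sum>w\<in>S. if w = v then l w else 0)"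
      by (intro sum.cong) auto
    moreover have "(\<Sum>w\<in>S. if w = v then l w else 0) = l v"
      using that finS by (simp add: sum.delta)
    ultimately show ?thesis by simp
  qed
  define n where "n = real (card S)"
  have n0: "0 < n" using finS Sne by (simp add: n_def card_gt_0_iff)
  define c where "c v = 1 / (2 * n) + (if v = 0 then 1 / 2 else 0)" for v :: "real^'n"
  have c0: "0 < c v" for v
  proof -
    have "0 < 1 / (2 * n)" using n0 by simp
    moreover have "0 \<le> (if v = 0 then 1 / 2 else 0 :: real)" by simp
    ultimately show ?thesis unfolding c_def by linarith
  qed
  have csum: "sum c S = 1"
  proof -
    have "sum c S = (\<Sum>v\<in>S. 1 / (2 * n)) + (\<Sum>v\<in>S. if v = 0 then 1 / 2 else 0)"
      by (simp add: c_def sum.distrib)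
    also have "\<dots> = 1" using finS S0 n0 by (auto simp: n_def)
    finally show ?thesis .
  qed
  define bary where "bary = (\<Sum>v\<in>S. (1 / n) *\<^sub>R v)"
  have baryD: "bary \<in> \<Delta>"
    unfolding bary_def using finS SD n0 by (intro convex_sum[OF finS cD]) (auto simp: n_def)
  define x0 where "x0 = (\<Sum>v\<in>S. c v *\<^sub>R v)"
  have x0eq: "x0 = bary - (1/2) *\<^sub>R (bary - 0)"
  proof -
    have "x0 = (\<Sum>v\<in>S. (1 / (2 * n)) *\<^sub>R v) + (\<Sum>v\<in>S. (if v = 0 then 1 / 2 else 0) *\<^sub>R v)"
      by (simp add: x0_def c_def scaleR_add_left sum.distrib)
    also have "(\<Sum>v\<in>S. (if v = 0 then 1 / 2 else 0) *\<^sub>R v) = 0"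
      by (intro sum.neutral) auto
    also have "(\<Sum>v\<in>S. (1 / (2 * n)) *\<^sub>R v) = (1/2) *\<^sub>R bary"
      by (simp add: bary_def scaleR_sum_right)
    finally have "x0 = (1/2) *\<^sub>R bary" by simp
    moreover have "bary - (1/2) *\<^sub>R (bary - 0) = (1 - 1/2) *\<^sub>R bary"
      by (simp only: diff_zero scaleR_diff_left scaleR_one)
    ultimately show ?thesis by simp
  qed
  have x0int: "x0 \<in> interior \<Delta>"
    unfolding x0eq by (rule mem_interior_convex_shrink[OF cD int0 baryD]) auto
  obtain u c0' where sup: "\<forall>x\<in>\<Delta>. \<psi> x \<le> c0' + u \<bullet> x" and eq0: "\<psi> x0 = c0' + u \<bullet> x0"
    using support_affine[OF psi_conv x0int] by blast
  define Lf where "Lf x = c0' + u \<bullet> x" for x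
  have Lf_comb: "Lf (\<Sum>v\<in>S. a v *\<^sub>R v) = (\<Sum>v\<in>S. a v * Lf v)" if "sum a S = 1" for a
  proof -
    have "(\<Sum>v\<in>S. a v * Lf v) = c0' * sum a S + (\<Sum>v\<in>S. a v * (u \<bullet> v))"
      by (simp add: Lf_def algebra_simps sum.distrib sum_distrib_left)
    then show ?thesis using that by (simp add: Lf_def inner_sum_right)
  qed
  have Lge: "l v \<le> Lf v" if "v \<in> S" for v
  proof -
    have "v \<in> \<Delta>" using SD that by blast
    then have "\<psi> v \<le> Lf v" using sup by (simp add: Lf_def)
    then show ?thesis using psiv[OF that] by simp
  qed
  have "(\<Sum>v\<in>S. c v * (Lf v - l v)) = 0"
  proof -
    have "(\<Sum>v\<in>S. c v * (Lf v - l v)) = (\<Sum>v\<in>S. c v * Lf v) - (\<Sum>v\<in>S. c v * l v)"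
      by (simp add: right_diff_distrib sum_subtractf)
    also have "(\<Sum>v\<in>S. c v * Lf v) = Lf x0" using Lf_comb[OF csum] by (simp add: x0_def)
    also have "(\<Sum>v\<in>S. c v * l v) = \<psi> x0" unfolding x0_def using c0 csum
      by (intro interp[symmetric]) (auto intro: less_imp_le)
    finally show ?thesis using eq0 by (simp add: Lf_def)
  qed
  then have "\<forall>v\<in>S. c v * (Lf v - l v) = 0"
  proof -
    have "0 \<le> c x * (Lf x - l x)" if "x \<in> S" for x
      using c0[of x] Lge[OF that] by simp
    then show ?thesis using \<open>(\<Sum>v\<in>S. c v * (Lf v - l v)) = 0\<close> finS
      by (subst sum_nonneg_eq_0_iff[symmetric]) auto
  qed
  then have Leq: "Lf v = l v" if "v \<in> S" for v using that c0[of v] by auto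
  have c0'eq: "c0' = l 0" using Leq[OF S0] by (simp add: Lf_def)
  have part1: "\<forall>v\<in>S. u \<bullet> v = l v - l 0"
  proof
    fix v assume "v \<in> S"
    then have "c0' + u \<bullet> v = l v" using Leq by (simp add: Lf_def)
    then show "u \<bullet> v = l v - l 0" using c0'eq by linarith
  qed
  have part2: "l \<omega> - l 0 < u \<bullet> \<omega>" if \<omega>: "\<omega> \<in> A" "\<omega> \<notin> S" for \<omega>
  proof (rule ccontr)
    assume "\<not> ?thesis"
    then have "Lf \<omega> \<le> l \<omega>" using c0'eq by (simp add: Lf_def)
    moreover have "\<psi> \<omega> \<le> Lf \<omega>" using sup \<omega> A_D by (auto simp: Lf_def)
    moreover have "l \<omega> \<le> \<psi> \<omega>" using psi_ge \<omega> by (simp add: l_def)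
    ultimately have e1: "\<psi> \<omega> = l \<omega>" and e2: "\<psi> \<omega> = Lf \<omega>" by auto
    have vert: "\<omega> \<in> tri_vertices T" using psi_eq[OF \<omega>(1)] e1 by (simp add: l_def)
    define C0 where "C0 = {x\<in>\<Delta>. \<psi> x = Lf x}"
    have mld: "max_linearity_domain \<Delta> \<psi> (convex hull S)"
      using psi_dom S unfolding linearity_domains_are_max_simplices_def by blast
    have hullD: "convex hull S \<subseteq> \<Delta>" using SD cD by (simp add: hull_minimal)
    have hullC0: "convex hull S \<subseteq> C0"
    proof
      fix x assume x: "x \<in> convex hull S"
      then obtain a where a: "\<forall>v\<in>S. 0 \<le> a v" "sum a S = 1" "(\<Sum>v\<in>S. a v *\<^sub>R v) = x"
        using convex_hull_finite[OF finS] by auto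
      have "\<psi> x = (\<Sum>v\<in>S. a v * l v)" using interp[OF a(1,2)] a(3) by simp
      also have "\<dots> = (\<Sum>v\<in>S. a v * Lf v)" using Leq by (intro sum.cong) auto
      also have "\<dots> = Lf x" using Lf_comb[OF a(2)] a(3) by simp
      finally show "x \<in> C0" using x hullD by (auto simp: C0_def)
    qed
    have convC0: "convex C0"
    proof (rule convexI)
      fix x y :: "real^'n" and a b :: real
      assume xy: "x \<in> C0" "y \<in> C0" and ab: "0 \<le> a" "0 \<le> b" "a + b = 1"
      have zD: "a *\<^sub>R x + b *\<^sub>R y \<in> \<Delta>" using cD xy ab unfolding C0_def convex_def by blast
      have "a * \<psi> x + b * \<psi> y \<le> \<psi> (a *\<^sub>R x + b *\<^sub>R y)"
        using psi_conv xy ab unfolding concave_on_iff C0_def by blast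
      moreover have "a * \<psi> x + b * \<psi> y = Lf (a *\<^sub>R x + b *\<^sub>R y)"
      proof -
        have "a * c0' + b * c0' = c0'" using ab(3) by (metis distrib_right mult_1)
        then show ?thesis using xy ab unfolding C0_def Lf_def by (simp add: inner_add_right algebra_simps)
      qed
      moreover have "\<psi> (a *\<^sub>R x + b *\<^sub>R y) \<le> Lf (a *\<^sub>R x + b *\<^sub>R y)" using sup zD by (simp add: Lf_def)
      ultimately show "a *\<^sub>R x + b *\<^sub>R y \<in> C0" using zD by (simp add: C0_def)
    qed
    have affC0: "affine_on C0 \<psi>" unfolding affine_on_def C0_def Lf_def
      by (rule exI[of _ u], rule exI[of _ c0']) (simp add: add.commute)
    have "C0 \<subseteq> \<Delta>" by (auto simp: C0_def)
    then have "C0 = convex hull S"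
      using mld convC0 hullC0 affC0 unfolding max_linearity_domain_def by blast
    moreover have "\<omega> \<in> C0" using \<omega> A_D e2 by (auto simp: C0_def)
    ultimately have wh: "\<omega> \<in> convex hull S" by simp
    obtain X where X: "X \<in> T" "\<omega> \<in> X" using vert by (auto simp: tri_vertices_def)
    have "{\<omega>} \<in> T" using tri X unfolding triangulation_def by blast
    then have "convex hull {\<omega>} \<inter> convex hull S = convex hull ({\<omega>} \<inter> S)"
      using tri ST unfolding triangulation_def by blast
    then show False using wh \<omega>(2) by simp
  qed
  show ?thesis using part1 part2 by (auto simp: l_def)
qed

lemma finite_pos_lb:
  fixes g :: "'a \<Rightarrow> real"
  assumes "finite P" "\<forall>p\<in>P. 0 < g p"
  shows "\<exists>\<delta>>0. \<forall>p\<in>P. \<delta> \<le> g p"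
proof (cases "P = {}")
  case True then show ?thesis by (intro exI[of _ 1]) auto
next
  case False
  have "Min (g ` P) \<in> g ` P" using assms False by (intro Min_in) auto
  then have "0 < Min (g ` P)" using assms by auto
  moreover have "\<forall>p\<in>P. Min (g ` P) \<le> g p" using assms by auto
  ultimately show ?thesis by blast
qed

lemma finite_ub:
  fixes g :: "'a \<Rightarrow> real"
  assumes "finite P"
  shows "\<exists>B\<ge>0. \<forall>p\<in>P. g p \<le> B"
proof (intro exI[of _ "\<Sum>p\<in>P. \<bar>g p\<bar>"] conjI ballI)
  show "0 \<le> (\<Sum>p\<in>P. \<bar>g p\<bar>)" by (simp add: sum_nonneg)
  fix p assume "p \<in> P"
  then have "\<bar>g p\<bar> \<le> (\<Sum>p\<in>P. \<bar>g p\<bar>)" using assms by (intro member_le_sum) auto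
  then show "g p \<le> (\<Sum>p\<in>P. \<bar>g p\<bar>)" by simp
qed

lemma chiC_cong:
  assumes "\<forall>v. Rf' v s = Rf v s" "\<forall>\<tau>\<in>bd. r' \<tau> s = r \<tau> s"
  shows "chiC Fam bd \<epsilon> l0 u d Rf' r' s \<gamma> \<omega> = chiC Fam bd \<epsilon> l0 u d Rf r s \<gamma> \<omega>"
proof -
  have m: "mfun bd r' F s = mfun bd r F s" for F
    unfolding mfun_def using assms(2) by (intro sum.cong) auto
  show ?thesis using assms(1)
    by (simp add: chiC_def thfun_def wfun_def m ellf_def)
qed

lemma chiC_affine:
  "chiC Fam bd \<epsilon> l0 u d Rf r s \<gamma> \<omega> =
     (\<Sum>F\<in>Fam. thfun Fam bd r F s \<gamma> *\<^sub>R (\<gamma> *\<^sub>R u F - (\<Sum>v\<in>F. ellf \<epsilon> Rf v s \<gamma> *\<^sub>R d F v))) \<bullet> \<omega> + \<gamma> * l0"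
  by (simp add: chiC_def inner_sum_left inner_diff_left algebra_simps)

lemma chiC_zero_gamma: "chiC Fam bd \<epsilon> l0 u d Rf r s 0 \<omega> = 0"
  by (simp add: chiC_def ellf_def)

lemma chiC_zero_omega: "chiC Fam bd \<epsilon> l0 u d Rf r s \<gamma> 0 = \<gamma> * l0"
  by (simp add: chiC_def)

theorem lemma3p4:
  fixes \<Delta> A :: "(real^'n) set"
    and T :: "(real^'n) set set"
    and lam :: "real^'n \<Rightarrow> int"
    and \<psi> :: "real^'n \<Rightarrow> real"
    and V :: "(real^'n) set \<Rightarrow> (real^'n) set"
    and rho0 :: "(real^'n) set \<Rightarrow> real^'n \<Rightarrow> real"
  assumes refl: "reflexive_polytope \<Delta>"
    and nonsing: "nonsingular_polytope \<Delta>"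
    and A_fin: "finite A"
    and A_sub: "A \<subseteq> \<Delta> \<inter> {x. lattice_point x}"
    and A_0: "0 \<in> A"
    and A_vert: "\<And>v. v extreme_point_of \<Delta> \<Longrightarrow> v \<in> A"
    and tri: "triangulation T \<Delta> A"
    and coh: "coherent T \<Delta>"
    and cent: "central T"
    and psi_interp: "pl_interpolates T (\<lambda>v. real_of_int (lam v)) \<psi>"
    and psi_conv: "concave_on \<Delta> \<psi>"
    and psi_dom: "linearity_domains_are_max_simplices T \<Delta> \<psi>"
    and psi_ge: "\<And>\<omega>. \<omega> \<in> A \<Longrightarrow> \<psi> \<omega> \<ge> real_of_int (lam \<omega>)"
    and psi_eq: "\<And>\<omega>. \<omega> \<in> A \<Longrightarrow> \<psi> \<omega> = real_of_int (lam \<omega>) \<longleftrightarrow> \<omega> \<in> tri_vertices T"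
    and V_open: "\<And>\<tau>. \<tau> \<in> boundary_tri T \<Delta> \<Longrightarrow> openin (top_of_set (frontier \<Delta>)) (V \<tau>)"
    and V_V0: "\<And>\<tau>. \<tau> \<in> boundary_tri T \<Delta> \<Longrightarrow> V0 T \<Delta> \<tau> \<subseteq> V \<tau>"
    and V_meet: "\<And>\<tau> \<tau>'. \<tau> \<in> boundary_tri T \<Delta> \<Longrightarrow> \<tau>' \<in> boundary_tri T \<Delta> \<Longrightarrow>
                   V \<tau> \<inter> V \<tau>' \<noteq> {} \<longleftrightarrow> \<tau> \<subseteq> \<tau>' \<or> \<tau>' \<subseteq> \<tau>"
    and rho0_smooth: "\<And>\<tau>. \<tau> \<in> boundary_tri T \<Delta> \<Longrightarrow> smooth_on (frontier \<Delta>) (rho0 \<tau>)"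
    and rho0_nonneg: "\<And>\<tau> s. \<tau> \<in> boundary_tri T \<Delta> \<Longrightarrow> s \<in> frontier \<Delta> \<Longrightarrow> 0 \<le> rho0 \<tau> s"
    and rho0_supp: "\<And>\<tau>. \<tau> \<in> boundary_tri T \<Delta> \<Longrightarrow>
                     closure {s \<in> frontier \<Delta>. rho0 \<tau> s \<noteq> 0} \<subseteq> V \<tau>"
    and rho0_sum: "\<And>s. s \<in> frontier \<Delta> \<Longrightarrow> (\<Sum>\<tau>\<in>boundary_tri T \<Delta>. rho0 \<tau> s) = 1"
  shows "\<exists>(chi :: real^'n \<Rightarrow> real \<Rightarrow> real^'n \<Rightarrow> real).
     (\<forall>\<omega>\<in>A. smooth_on (frontier \<Delta> \<times> {0..}) (\<lambda>(s, \<gamma>). chi s \<gamma> \<omega>)) \<and>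
     (\<forall>s\<in>frontier \<Delta>. \<forall>\<gamma>\<ge>0. \<exists>a b. \<forall>\<omega>\<in>A. chi s \<gamma> \<omega> = a \<bullet> \<omega> + b) \<and>
     (\<forall>s\<in>frontier \<Delta>. \<forall>\<omega>\<in>A. chi s 0 \<omega> = 0) \<and>
     (\<forall>s\<in>frontier \<Delta>. \<forall>\<gamma>\<ge>0. chi s \<gamma> 0 = \<gamma> * real_of_int (lam 0)) \<and>
     (\<forall>\<omega>\<in>A. uniform_limit (frontier \<Delta>)
         (\<lambda>\<gamma> s. exp (\<gamma> * real_of_int (lam \<omega>) - chi s \<gamma> \<omega>))
         (\<lambda>s. rho T \<Delta> rho0 \<omega> s) at_top)"
proof -
  define l where "l v = real_of_int (lam v)" for v
  define lp where "lp v = l v - l 0" for v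
  define bd where "bd = boundary_tri T \<Delta>"
  have int0: "0 \<in> interior \<Delta>" using refl by (simp add: reflexive_polytope_def)
  have cD: "convex \<Delta>" using psi_conv by (simp add: concave_on_iff)
  have A_D: "A \<subseteq> \<Delta>" using A_sub by blast
  have finT: "finite T" using tri by (simp add: triangulation_def)
  have TA: "\<forall>Y\<in>T. Y \<subseteq> A" using tri by (simp add: triangulation_def)
  have finY: "\<forall>Y\<in>T. finite Y" using TA A_fin finite_subset by blast
  have bdT: "bd \<subseteq> T" by (auto simp: bd_def boundary_tri_def)
  have finbd: "finite bd" using bdT finT finite_subset by blast
  have fr0: "0 \<notin> frontier \<Delta>" using int0 by (simp add: frontier_def)
  have bd0: "0 \<notin> \<tau>" if "\<tau> \<in> bd" for \<tau>
  proof -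
    have "\<tau> \<subseteq> convex hull \<tau>" by (rule hull_subset)
    also have "\<dots> \<subseteq> frontier \<Delta>" using that by (simp add: bd_def boundary_tri_def)
    finally show ?thesis using fr0 by blast
  qed
  define MS where "MS = {S. max_simplex T S}"
  define Fam where "Fam = (\<lambda>S. S - {0}) ` MS"
  have "MS \<subseteq> T" by (auto simp: MS_def max_simplex_def)
  then have "finite MS" using finT finite_subset by blast
  then have finFam: "finite Fam" unfolding Fam_def by (rule finite_imageI)
  have Tne: "T \<noteq> {}"
  proof
    assume "T = {}"
    then have "\<Delta> = {}" using tri by (simp add: triangulation_def)
    then show False using int0 interior_subset by blast
  qed
  then obtain X where "X \<in> T" by blast
  then obtain S0 where "max_simplex T S0" using exists_max_simplex[OF finT finY] by blast
  then have neFam: "Fam \<noteq> {}" by (auto simp: Fam_def MS_def)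
  have finF: "\<forall>F\<in>Fam. finite F"
    using finY by (auto simp: Fam_def MS_def max_simplex_def)
  define Q where "Q F p \<longleftrightarrow> (\<forall>v\<in>F. \<forall>w\<in>F. snd p v \<bullet> w = (if v = w then 1 else 0)) \<and>
      (\<forall>v\<in>F. fst p \<bullet> v = lp v) \<and> (\<forall>\<omega>\<in>A. \<omega> \<noteq> 0 \<and> \<omega> \<notin> F \<longrightarrow> lp \<omega> < fst p \<bullet> \<omega>)"
    for F :: "(real^'n) set" and p :: "(real^'n) \<times> ((real^'n) \<Rightarrow> (real^'n))"
  have FamP: "\<exists>p. Q F p"
    if FF: "F \<in> Fam" for F
  proof -
    obtain S where S: "max_simplex T S" "F = S - {0}" using FF by (auto simp: Fam_def MS_def)
    have ST: "S \<in> T" using S by (simp add: max_simplex_def)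
    have S0: "0 \<in> S" using cent S by (simp add: central_def)
    have nad: "\<not> affine_dependent S" using tri ST by (simp add: triangulation_def)
    have SF: "S = insert 0 F" using S S0 by auto
    have F0: "0 \<notin> F" using S by blast
    have e: "(\<lambda>x. -0 + x) ` F = F" by simp
    have "affine_dependent (insert 0 F) \<longleftrightarrow> dependent F"
      using affine_dependent_iff_dependent[OF F0] unfolding e .
    then have ind: "independent F" using nad SF by simp
    have "\<forall>v\<in>F. \<exists>y. \<forall>w\<in>F. y \<bullet> w = (if v = w then 1 else 0)"
      using dual_vectors[OF ind] by blast
    then obtain dd where dd: "\<forall>v\<in>F. \<forall>w\<in>F. dd v \<bullet> w = (if v = w then 1 else 0)"
      using bchoice[of F "\<lambda>v y. \<forall>w\<in>F. y \<bullet> w = (if v = w then 1 else 0)"] by blast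
    obtain uu where uu: "\<forall>v\<in>S. uu \<bullet> v = real_of_int (lam v) - real_of_int (lam 0)"
        "\<forall>\<omega>\<in>A. \<omega> \<notin> S \<longrightarrow> real_of_int (lam \<omega>) - real_of_int (lam 0) < uu \<bullet> \<omega>"
      using max_simplex_support[OF A_fin A_D tri cent psi_interp psi_conv psi_dom psi_ge psi_eq int0 S(1)]
      by blast
    have "\<forall>v\<in>F. uu \<bullet> v = lp v" using uu(1) S by (auto simp: lp_def l_def)
    moreover have "\<forall>\<omega>\<in>A. \<omega> \<noteq> 0 \<and> \<omega> \<notin> F \<longrightarrow> lp \<omega> < uu \<bullet> \<omega>"
      using uu(2) S by (auto simp: lp_def l_def)
    ultimately show ?thesis using dd unfolding Q_def by (intro exI[of _ "(uu, dd)"]) simp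
  qed
  then have "\<forall>F\<in>Fam. \<exists>p. Q F p" by blast
  then obtain f where f: "\<forall>F\<in>Fam. Q F (f F)" by (rule bchoice[THEN exE])
  define u where "u F = fst (f F)" for F
  define d where "d F = snd (f F)" for F
  have ud: "\<forall>F\<in>Fam. (\<forall>v\<in>F. \<forall>w\<in>F. d F v \<bullet> w = (if v = w then 1 else 0)) \<and>
      (\<forall>v\<in>F. u F \<bullet> v = lp v) \<and> (\<forall>\<omega>\<in>A. \<omega> \<noteq> 0 \<and> \<omega> \<notin> F \<longrightarrow> lp \<omega> < u F \<bullet> \<omega>)"
    using f unfolding u_def d_def Q_def by blast
  have dual: "\<forall>F\<in>Fam. \<forall>v\<in>F. \<forall>w\<in>F. d F v \<bullet> w = (if v = w then 1 else 0)" using ud by blast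
  have ueq: "\<forall>F\<in>Fam. \<forall>v\<in>F. u F \<bullet> v = lp v" using ud by blast
  have ugt: "\<forall>F\<in>Fam. \<forall>\<omega>\<in>A. \<omega> \<noteq> 0 \<and> \<omega> \<notin> F \<longrightarrow> lp \<omega> < u F \<bullet> \<omega>" using ud by blast
  define P where "P = {p \<in> Fam \<times> A. snd p \<noteq> 0 \<and> snd p \<notin> fst p}"
  have finFA: "finite (Fam \<times> A)" using finFam A_fin by simp
  have "P \<subseteq> Fam \<times> A" unfolding P_def by blast
  then have finP: "finite P" using finFA finite_subset by blast
  obtain \<delta> where \<delta>: "\<delta> > 0" "\<forall>p\<in>P. \<delta> \<le> u (fst p) \<bullet> snd p - lp (snd p)"
    using finite_pos_lb[OF finP, of "\<lambda>p. u (fst p) \<bullet> snd p - lp (snd p)"] ugt by (auto simp: P_def)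
  have sep: "\<forall>F\<in>Fam. \<omega> \<notin> F \<longrightarrow> lp \<omega> + \<delta> \<le> u F \<bullet> \<omega>" if "\<omega> \<in> A" "\<omega> \<noteq> 0" for \<omega>
  proof (intro ballI impI)
    fix F assume "F \<in> Fam" "\<omega> \<notin> F"
    then have "(F, \<omega>) \<in> P" using that unfolding P_def by simp
    then have "\<delta> \<le> u F \<bullet> \<omega> - lp \<omega>" using \<delta>(2) by fastforce
    then show "lp \<omega> + \<delta> \<le> u F \<bullet> \<omega>" by simp
  qed
  obtain B where B: "B \<ge> 0" "\<forall>p\<in>Fam \<times> A. (\<Sum>v\<in>fst p. \<bar>d (fst p) v \<bullet> snd p\<bar>) \<le> B"
    using finite_ub[OF finFA, of "\<lambda>p. (\<Sum>v\<in>fst p. \<bar>d (fst p) v \<bullet> snd p\<bar>)"] by blast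
  obtain M where M: "M \<ge> 0" "\<forall>p\<in>Fam \<times> A. \<bar>lp (snd p) - u (fst p) \<bullet> snd p\<bar> \<le> M"
    using finite_ub[OF finFA, of "\<lambda>p. \<bar>lp (snd p) - u (fst p) \<bullet> snd p\<bar>"] by blast
  define \<epsilon> where "\<epsilon> = \<delta> / (B + 1)"
  have eps: "0 < \<epsilon>" "\<epsilon> * (B + 1) \<le> \<delta>" using \<delta>(1) B(1) by (auto simp: \<epsilon>_def)
  define Rf where "Rf = rho T \<Delta> rho0"
  define chi where "chi = chiC Fam bd \<epsilon> (l 0) u d Rf rho0"
  have Rb: "\<forall>v. 0 \<le> Rf v s \<and> Rf v s \<le> 1" if s: "s \<in> frontier \<Delta>" for s
  proof
    fix v
    have nn: "0 \<le> (\<Sum>\<tau>\<in>{\<tau>\<in>bd. v \<in> \<tau>}. rho0 \<tau> s)"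
      using rho0_nonneg s by (intro sum_nonneg) (auto simp: bd_def)
    have "(\<Sum>\<tau>\<in>{\<tau>\<in>bd. v \<in> \<tau>}. rho0 \<tau> s) \<le> (\<Sum>\<tau>\<in>bd. rho0 \<tau> s)"
      using rho0_nonneg s finbd by (intro sum_mono2) (auto simp: bd_def)
    also have "\<dots> = 1" using rho0_sum s by (simp add: bd_def)
    finally show "0 \<le> Rf v s \<and> Rf v s \<le> 1" using nn by (auto simp: Rf_def rho_def bd_def)
  qed
  have Rle: "\<forall>F\<in>Fam. \<omega> \<notin> F \<longrightarrow> Rf \<omega> s \<le> mfun bd rho0 F s"
    if s: "s \<in> frontier \<Delta>" and \<omega>: "\<omega> \<noteq> 0" for s \<omega>
  proof (intro ballI impI)
    fix F assume F: "F \<in> Fam" "\<omega> \<notin> F"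
    have mnn: "0 \<le> mfun bd rho0 F s"
      unfolding mfun_def using rho0_nonneg s by (intro sum_nonneg) (auto simp: bd_def)
    have "(\<Sum>\<tau>\<in>{\<tau>\<in>bd. \<omega> \<in> \<tau>}. rho0 \<tau> s) \<le> mfun bd rho0 F s"
      unfolding mfun_def using rho0_nonneg s finbd F(2) by (intro sum_mono2) (auto simp: bd_def)
    then show "Rf \<omega> s \<le> mfun bd rho0 F s" using mnn \<omega> by (auto simp: Rf_def rho_def bd_def)
  qed
  have cover: "\<exists>G\<in>Fam. \<forall>\<tau>\<in>bd. rho0 \<tau> s \<noteq> 0 \<longrightarrow> \<tau> \<subseteq> G" if s: "s \<in> frontier \<Delta>" for s
  proof -
    define C where "C = {\<tau>\<in>bd. rho0 \<tau> s \<noteq> 0}"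
    have inV: "s \<in> V \<tau>" if "\<tau> \<in> C" for \<tau>
    proof -
      have "s \<in> {s \<in> frontier \<Delta>. rho0 \<tau> s \<noteq> 0}" using that s by (simp add: C_def)
      then have "s \<in> closure {s \<in> frontier \<Delta>. rho0 \<tau> s \<noteq> 0}" by (rule closure_subset[THEN subsetD])
      then show ?thesis using rho0_supp that by (auto simp: C_def bd_def)
    qed
    have comp: "\<tau> \<subseteq> \<tau>' \<or> \<tau>' \<subseteq> \<tau>" if "\<tau> \<in> C" "\<tau>' \<in> C" for \<tau> \<tau>'
      using V_meet[of \<tau> \<tau>'] inV[OF that(1)] inV[OF that(2)] that by (auto simp: C_def bd_def)
    show ?thesis
    proof (cases "C = {}")
      case True then show ?thesis using neFam by (auto simp: C_def)
    next
      case False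
      have finC: "finite C" using finbd by (simp add: C_def)
      define m where "m = Max (card ` C)"
      have "m \<in> card ` C" unfolding m_def using finC False by (intro Max_in) auto
      then obtain \<tau>m where \<tau>m: "\<tau>m \<in> C" "card \<tau>m = m" by blast
      have big: "\<tau> \<subseteq> \<tau>m" if "\<tau> \<in> C" for \<tau>
      proof -
        have "card \<tau> \<le> m" using finC that by (auto simp: m_def)
        moreover have "finite \<tau>" using finY bdT that by (auto simp: C_def)
        ultimately show ?thesis using comp[OF that \<tau>m(1)] \<tau>m(2) card_subset_eq
          by (metis le_antisym card_mono)
      qed
      have "\<tau>m \<in> T" using \<tau>m bdT by (auto simp: C_def)
      then obtain S where S: "max_simplex T S" "\<tau>m \<subseteq> S" using exists_max_simplex[OF finT finY] by blast
      have "S - {0} \<in> Fam" using S by (auto simp: Fam_def MS_def)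
      moreover have "\<forall>\<tau>\<in>bd. rho0 \<tau> s \<noteq> 0 \<longrightarrow> \<tau> \<subseteq> S - {0}"
        using big S(2) bd0 by (auto simp: C_def)
      ultimately show ?thesis by blast
    qed
  qed
  have P1: "\<forall>\<omega>\<in>A. smooth_on (frontier \<Delta> \<times> {0..}) (\<lambda>(s, \<gamma>). chi s \<gamma> \<omega>)"
  proof
    fix \<omega> assume "\<omega> \<in> A"
    have ex: "\<exists>p. open (fst p) \<and> frontier \<Delta> \<subseteq> fst p \<and> (\<forall>k. Ck_on k (fst p) (snd p)) \<and>
        (\<forall>x\<in>frontier \<Delta>. snd p x = rho0 \<tau> x)" if "\<tau> \<in> bd" for \<tau>
    proof -
      have "\<tau> \<in> boundary_tri T \<Delta>" using that by (simp add: bd_def)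
      then have "smooth_on (frontier \<Delta>) (rho0 \<tau>)" by (rule rho0_smooth)
      then obtain U g where h: "open U \<and> frontier \<Delta> \<subseteq> U \<and> (\<forall>k. Ck_on k U g) \<and> (\<forall>x\<in>frontier \<Delta>. g x = rho0 \<tau> x)"
        unfolding smooth_on_def by (elim exE)
      then show ?thesis by (intro exI[of _ "(U, g)"]) simp
    qed
    then have "\<forall>\<tau>\<in>bd. \<exists>p. open (fst p) \<and> frontier \<Delta> \<subseteq> fst p \<and> (\<forall>k. Ck_on k (fst p) (snd p)) \<and>
        (\<forall>x\<in>frontier \<Delta>. snd p x = rho0 \<tau> x)" by blast
    then obtain pp where pp: "\<forall>\<tau>\<in>bd. open (fst (pp \<tau>)) \<and> frontier \<Delta> \<subseteq> fst (pp \<tau>) \<and>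
        (\<forall>k. Ck_on k (fst (pp \<tau>)) (snd (pp \<tau>))) \<and> (\<forall>x\<in>frontier \<Delta>. snd (pp \<tau>) x = rho0 \<tau> x)"
      by (rule bchoice[THEN exE])
    define U0 where "U0 = (\<Inter>\<tau>\<in>bd. fst (pp \<tau>))"
    have U0o: "open U0" unfolding U0_def using finbd pp by (intro open_INT) auto
    have frU0: "frontier \<Delta> \<subseteq> U0" unfolding U0_def using pp by blast
    define r' where "r' \<tau> = (if \<tau> \<in> bd then snd (pp \<tau>) else rho0 \<tau>)" for \<tau>
    have rCk: "\<forall>\<tau>\<in>bd. \<forall>k. Ck_on k U0 (r' \<tau>)"
    proof (intro ballI allI)
      fix \<tau> k assume t: "\<tau> \<in> bd"
      have "U0 \<subseteq> fst (pp \<tau>)" unfolding U0_def using t by blast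
      then show "Ck_on k U0 (r' \<tau>)" using pp t unfolding r'_def by (auto intro: Ck_subset)
    qed
    define Rf' where "Rf' = rho T \<Delta> r'"
    have RCk: "\<forall>v\<in>\<Union>Fam. \<forall>k. Ck_on k U0 (Rf' v)"
    proof (intro ballI allI)
      fix v k
      have e: "Rf' v = (\<lambda>s. if v = 0 then 1 else if v \<in> tri_vertices bd
          then (\<Sum>\<tau>\<in>{\<tau>\<in>bd. v \<in> \<tau>}. r' \<tau> s) else 0)"
        by (simp add: Rf'_def rho_def bd_def fun_eq_iff)
      have "Ck_on k U0 (\<lambda>s. \<Sum>\<tau>\<in>{\<tau>\<in>bd. v \<in> \<tau>}. r' \<tau> s)"
        using finbd rCk by (intro Ck_sum) auto
      then show "Ck_on k U0 (Rf' v)" unfolding e by (cases "v = 0"; cases "v \<in> tri_vertices bd") (simp_all add: Ck_const)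
    qed
    have Req: "Rf' v s = Rf v s" if "s \<in> frontier \<Delta>" for v s
    proof -
      have "(\<Sum>\<tau>\<in>{\<tau>\<in>bd. v \<in> \<tau>}. r' \<tau> s) = (\<Sum>\<tau>\<in>{\<tau>\<in>bd. v \<in> \<tau>}. rho0 \<tau> s)"
        using pp that by (intro sum.cong) (auto simp: r'_def)
      then show ?thesis by (simp add: Rf'_def Rf_def rho_def bd_def)
    qed
    have req: "\<forall>\<tau>\<in>bd. r' \<tau> s = rho0 \<tau> s" if "s \<in> frontier \<Delta>" for s
      using pp that by (auto simp: r'_def)
    define Uset where "Uset = {p \<in> U0 \<times> UNIV. \<forall>v\<in>\<Union>Fam.
                   0 < Rf' v (fst p) * (1 - exp (-(\<epsilon> * snd p))) + exp (-(\<epsilon> * snd p))}"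
    have sm1: "open Uset" unfolding Uset_def
      by (rule chiC_smooth(1)[OF finFam neFam finF finbd U0o rCk RCk])
    have sm2: "\<forall>k. Ck_on k Uset (\<lambda>p. chiC Fam bd \<epsilon> (l 0) u d Rf' r' (fst p) (snd p) \<omega>)" unfolding Uset_def
      by (rule chiC_smooth(2)[OF finFam neFam finF finbd U0o rCk RCk])
    have sub: "frontier \<Delta> \<times> {0::real..} \<subseteq> Uset"
    proof
      fix p assume p: "p \<in> frontier \<Delta> \<times> {0::real..}"
      then obtain s \<gamma> where sg: "p = (s, \<gamma>)" "s \<in> frontier \<Delta>" "0 \<le> \<gamma>" by auto
      have E1: "exp (-(\<epsilon> * \<gamma>)) \<le> 1" using eps(1) sg(3) by simp
      have pos: "0 < Rf' v s * (1 - exp (-(\<epsilon> * \<gamma>))) + exp (-(\<epsilon> * \<gamma>))" for v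
      proof -
        have "0 \<le> Rf' v s" using Req[OF sg(2)] Rb[OF sg(2)] by simp
        then have "0 \<le> Rf' v s * (1 - exp (-(\<epsilon> * \<gamma>)))" using E1 by simp
        moreover have "0 < exp (-(\<epsilon> * \<gamma>))" by simp
        ultimately show ?thesis by linarith
      qed
      show "p \<in> Uset" unfolding Uset_def using sg frU0 pos by auto
    qed
    show "smooth_on (frontier \<Delta> \<times> {0..}) (\<lambda>(s, \<gamma>). chi s \<gamma> \<omega>)"
      unfolding smooth_on_def
    proof (intro exI conjI)
      show "open Uset" by (rule sm1)
      show "frontier \<Delta> \<times> {0::real..} \<subseteq> Uset" by (rule sub)
      show "\<forall>k. Ck_on k Uset (\<lambda>p. chiC Fam bd \<epsilon> (l 0) u d Rf' r' (fst p) (snd p) \<omega>)" by (rule sm2)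
      show "\<forall>x\<in>frontier \<Delta> \<times> {0::real..}. chiC Fam bd \<epsilon> (l 0) u d Rf' r' (fst x) (snd x) \<omega> = (case x of (s, \<gamma>) \<Rightarrow> chi s \<gamma> \<omega>)"
      proof
        fix x assume "x \<in> frontier \<Delta> \<times> {0::real..}"
        then obtain s \<gamma> where sg: "x = (s, \<gamma>)" "s \<in> frontier \<Delta>" by auto
        have "chiC Fam bd \<epsilon> (l 0) u d Rf' r' s \<gamma> \<omega> = chiC Fam bd \<epsilon> (l 0) u d Rf rho0 s \<gamma> \<omega>"
          using Req[OF sg(2)] req[OF sg(2)] by (intro chiC_cong) auto
        then show "chiC Fam bd \<epsilon> (l 0) u d Rf' r' (fst x) (snd x) \<omega> = (case x of (s, \<gamma>) \<Rightarrow> chi s \<gamma> \<omega>)"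
          using sg by (simp add: chi_def)
      qed
    qed
  qed
  have P2: "\<forall>s\<in>frontier \<Delta>. \<forall>\<gamma>\<ge>0. \<exists>a b. \<forall>\<omega>\<in>A. chi s \<gamma> \<omega> = a \<bullet> \<omega> + b"
    unfolding chi_def by (subst chiC_affine) blast
  have P3: "\<forall>s\<in>frontier \<Delta>. \<forall>\<omega>\<in>A. chi s 0 \<omega> = 0"
    by (simp add: chi_def chiC_zero_gamma)
  have P4: "\<forall>s\<in>frontier \<Delta>. \<forall>\<gamma>\<ge>0. chi s \<gamma> 0 = \<gamma> * real_of_int (lam 0)"
    by (simp add: chi_def chiC_zero_omega l_def)
  have P5: "\<forall>\<omega>\<in>A. uniform_limit (frontier \<Delta>)
         (\<lambda>\<gamma> s. exp (\<gamma> * real_of_int (lam \<omega>) - chi s \<gamma> \<omega>))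
         (\<lambda>s. rho T \<Delta> rho0 \<omega> s) at_top"
  proof
    fix \<omega> assume \<omega>A: "\<omega> \<in> A"
    show "uniform_limit (frontier \<Delta>) (\<lambda>\<gamma> s. exp (\<gamma> * real_of_int (lam \<omega>) - chi s \<gamma> \<omega>))
         (\<lambda>s. rho T \<Delta> rho0 \<omega> s) at_top"
    proof (cases "\<omega> = 0")
      case True
      then show ?thesis
        by (simp add: chi_def chiC_zero_omega l_def rho_def uniform_limit_iff)
    next
      case False
      define K where "K = (M + \<epsilon> * B) * card Fam"
      have bound: "\<bar>exp (\<gamma> * real_of_int (lam \<omega>) - chi s \<gamma> \<omega>) - rho T \<Delta> rho0 \<omega> s\<bar>
          \<le> exp (-(\<epsilon>*\<gamma>)) + K / \<gamma>" if s: "s \<in> frontier \<Delta>" and g: "0 < \<gamma>" for s \<gamma>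
      proof -
        have Bb: "\<forall>F\<in>Fam. (\<Sum>v\<in>F. \<bar>d F v \<bullet> \<omega>\<bar>) \<le> B" using B(2) \<omega>A by auto
        have Mb: "\<forall>F\<in>Fam. \<bar>lp \<omega> - u F \<bullet> \<omega>\<bar> \<le> M" using M(2) \<omega>A by auto
        have "\<bar>exp (\<gamma> * lp \<omega> - (chiC Fam bd \<epsilon> (l 0) u d Rf rho0 s \<gamma> \<omega> - \<gamma> * l 0)) - Rf \<omega> s\<bar>
           \<le> exp (-(\<epsilon>*\<gamma>)) + (M + \<epsilon> * B) * card Fam / \<gamma>"
          using finFam neFam finF dual ueq sep[OF \<omega>A False] Bb Mb eps Rb[OF s] cover[OF s] Rle[OF s False] g
          by (rule chi_bound)
        moreover have "\<gamma> * lp \<omega> - (chiC Fam bd \<epsilon> (l 0) u d Rf rho0 s \<gamma> \<omega> - \<gamma> * l 0)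
            = \<gamma> * real_of_int (lam \<omega>) - chi s \<gamma> \<omega>"
          by (simp add: chi_def lp_def l_def algebra_simps)
        ultimately show ?thesis by (simp add: K_def Rf_def)
      qed
      have lim: "((\<lambda>\<gamma>::real. exp(-(\<epsilon>*\<gamma>)) + K/\<gamma>) \<longlongrightarrow> 0) at_top"
        using eps(1) by real_asymp
      show ?thesis
        unfolding uniform_limit_iff
      proof (intro allI impI)
        fix e :: real assume e: "0 < e"
        have ev: "\<forall>\<^sub>F \<gamma> in at_top. exp(-(\<epsilon>*\<gamma>)) + K/\<gamma> < e"
          using order_tendstoD(2)[OF lim e] .
        show "\<forall>\<^sub>F \<gamma> in at_top. \<forall>s\<in>frontier \<Delta>.
            dist (exp (\<gamma> * real_of_int (lam \<omega>) - chi s \<gamma> \<omega>)) (rho T \<Delta> rho0 \<omega> s) < e"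
          using ev eventually_gt_at_top[of 0]
        proof eventually_elim
          case (elim \<gamma>)
          then show ?case using bound by (auto simp: dist_real_def intro: le_less_trans)
        qed
      qed
    qed
  qed
  show ?thesis using P1 P2 P3 P4 P5 by blast
qed

end
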